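(* Assume the standing setting below, including Assumption S1. Let $x_0\in X$ be a random point independent of the i.i.d. sequence $\omega_1,\omega_2,\dots$ with $\mathbb{E}\{\|x_0-x_*\|^2\}\le R^2$. Run the Stochastic Mirror Descent recursion $x_i=\mathrm{Prox}_{\beta}(\nabla G(x_{i-1},\omega_i),x_{i-1};x_0)$, $i=1,\dots,m$, with constant stepsize parameter $\beta\ge 2\varkappa\nu$. Then $\widehat x_m=\frac1m\sum_{i=1}^m x_i$ satisfies $$\mathbb{E}\{g(\widehat x_m)\}-g_*\le \frac{2R^2}{m}\Big(\Theta\beta+\frac{\varkappa\nu^2}{2\beta}\Big)+\frac{2\varkappa'\varsigma_*^2}{\beta}.$$
   Context: Standing setting. $E$ is a finite-dimensional real Euclidean space with inner product $\langle\cdot,\cdot\rangle$ and $\|z\|_2=\langle z,z\rangle^{1/2}$; $\|\cdot\|$ is a norm on $E$ with conjugate norm $\|s\|_*=\max\{\langle s,x\rangle:\|x\|\le1\}$. $X\subset E$ is convex and closed with nonempty interior. $\omega$ is a random variable with distribution $P$ on $\Omega$, $G:X\times\Omega\to\mathbb{R}$, and $g(x)=\mathbb{E}\{G(x,\omega)\}$ is finite, convex and differentiable on $X$ with $\|\nabla g(x)-\nabla g(x')\|_*\le \mathcal{L}\|x-x'\|$ for all $x,x'\in X$. The problem $\min_{x\in X}g(x)$ has a unique minimizer $x_*$, $g_*=g(x_* )$. $\omega_1,\omega_2,\dots$ are i.i.d. copies of $\omega$. Assumption S1: $G(\cdot,\omega)$ is differentiable on $X$ for a.e. $\omega$; $\mathbb{E}\{\nabla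 G(x,\omega)\}=\nabla g(x)$; with $\zeta(x,\omega)=\nabla G(x,\omega)-\nabla g(x)$ and $\varsigma^2(x)=\mathbb{E}\{\|\zeta(x,\omega)\|_*^2\}$, there are constants $1\le\varkappa,\varkappa'<\infty$ and $\mathcal{L}\le\nu<\infty$ such that for all $x\in X$: $\varsigma^2(x)\le\varkappa\nu[g(x)-g_*-\langle\nabla g(x_* ),x-x_*\rangle]+\varkappa'\varsigma_*^2$, where $\varsigma_*^2=\mathbb{E}\{\|\zeta(x_*,\omega)\|_*^2\}$. Distance-generating function: $\vartheta:E\to\mathbb{R}$ is continuously differentiable, convex, with $\langle\nabla\vartheta(x)-\nabla\vartheta(x'),x-x'\rangle\ge\|x-x'\|^2$ for all $x,x'$, $\vartheta(x)\ge\vartheta(0)=0$, and $\vartheta(x)\le\Theta\|x\|^2$ for all $x$ (so $\Theta\ge 1/2$). Bregman divergence: $V_{x_0}(x,z)=\vartheta(z-x_0)-\vartheta(x-x_0)-\langle\nabla\vartheta(x-x_0),z-x\rangle$. Proximal mapping: for $u\in E$, $x,x_0\in X$, $\beta>0$, $\mathrm{Prox}_\beta(u,x;x_0)=\arg\min_{z\in X}\{\langle u,z\rangle+\beta V_{x_0}(x,z)\}$. *)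

theory Defs
  imports "HOL-Probability.Probability"
begin

definition is_norm :: "('e::euclidean_space \<Rightarrow> real) \<Rightarrow> bool" where
  "is_norm nrm \<longleftrightarrow>
     (\<forall>x. nrm x = 0 \<longleftrightarrow> x = 0) \<and>
     (\<forall>x y. nrm (x + y) \<le> nrm x + nrm y) \<and>
     (\<forall>c x. nrm (c *\<^sub>R x) = \<bar>c\<bar> * nrm x)"

definition dual_norm :: "('e::euclidean_space \<Rightarrow> real) \<Rightarrow> 'e \<Rightarrow> real" where
  "dual_norm nrm s = Sup ((\<lambda>x. s \<bullet> x) ` {x. nrm x \<le> 1})"

text \<open>Bregman divergence V_{x0}(x,z) of the d.-g.f. th with gradient gth.\<close>
definition bregman :: "('e::euclidean_space \<Rightarrow> real) \<Rightarrow> ('e \<Rightarrow> 'e) \<Rightarrow> 'e \<Rightarrow> 'e \<Rightarrow> 'e \<Rightarrow> real" where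
  "bregman th gth x0 x z = th (z - x0) - th (x - x0) - gth (x - x0) \<bullet> (z - x)"

definition prox :: "('e::euclidean_space \<Rightarrow> real) \<Rightarrow> ('e \<Rightarrow> 'e) \<Rightarrow> 'e set \<Rightarrow> real \<Rightarrow> 'e \<Rightarrow> 'e \<Rightarrow> 'e \<Rightarrow> 'e" where
  "prox th gth X \<beta> u x x0 =
     (SOME z. z \<in> X \<and> (\<forall>y\<in>X. u \<bullet> z + \<beta> * bregman th gth x0 x z \<le> u \<bullet> y + \<beta> * bregman th gth x0 x y))"

text \<open>Stochastic Mirror Descent iterates; w i plays the role of omega_{i+1}.\<close>
primrec smd_iter :: "('e::euclidean_space \<Rightarrow> real) \<Rightarrow> ('e \<Rightarrow> 'e) \<Rightarrow> 'e set \<Rightarrow> real \<Rightarrow>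
    ('e \<Rightarrow> 'w \<Rightarrow> 'e) \<Rightarrow> (nat \<Rightarrow> 'w) \<Rightarrow> 'e \<Rightarrow> nat \<Rightarrow> 'e" where
  "smd_iter th gth X \<beta> dG w x0 0 = x0"
| "smd_iter th gth X \<beta> dG w x0 (Suc i) =
     prox th gth X \<beta> (dG (smd_iter th gth X \<beta> dG w x0 i) (w i)) (smd_iter th gth X \<beta> dG w x0 i) x0"

definition sigma2 :: "('e::euclidean_space \<Rightarrow> real) \<Rightarrow> 'w measure \<Rightarrow> ('e \<Rightarrow> 'w \<Rightarrow> 'e) \<Rightarrow> ('e \<Rightarrow> 'e) \<Rightarrow> 'e \<Rightarrow> ennreal" where
  "sigma2 nrm P dG gradg x = (\<integral>\<^sup>+ \<omega>. ennreal ((dual_norm nrm (dG x \<omega> - gradg x))\<^sup>2) \<partial>P)"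

text \<open>Independence of two random variables with possibly different value types:
  independence of the generated sigma-algebras.\<close>
definition indep_rvs :: "'s measure \<Rightarrow> 'a measure \<Rightarrow> ('s \<Rightarrow> 'a) \<Rightarrow> 'b measure \<Rightarrow> ('s \<Rightarrow> 'b) \<Rightarrow> bool" where
  "indep_rvs M N1 X N2 Y \<longleftrightarrow>
     prob_space.indep_set M (sets (vimage_algebra (space M) X N1)) (sets (vimage_algebra (space M) Y N2))"

end

theory Submission
  imports Defs
begin


section \<open>Norm facts\<close>

lemma nrm_0: "is_norm nrm \<Longrightarrow> nrm 0 = 0"
  unfolding is_norm_def by auto

lemma nrm_scale: "is_norm nrm \<Longrightarrow> nrm (c *\<^sub>R x) = \<bar>c\<bar> * nrm x"
  unfolding is_norm_def by auto

lemma nrm_triangle: "is_norm nrm \<Longrightarrow> nrm (x + y) \<le> nrm x + nrm y"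
  unfolding is_norm_def by auto

lemma nrm_minus: "is_norm nrm \<Longrightarrow> nrm (- x) = nrm x"
  using nrm_scale[of nrm "-1" x] by simp

lemma nrm_nonneg: assumes "is_norm nrm" shows "nrm x \<ge> 0"
proof -
  have "nrm (x + - x) \<le> nrm x + nrm (- x)" by (rule nrm_triangle[OF assms])
  then show ?thesis using nrm_0[OF assms] nrm_minus[OF assms, of x] by simp
qed

lemma nrm_diff_sym: "is_norm nrm \<Longrightarrow> nrm (x - y) = nrm (y - x)"
  using nrm_minus[of nrm "x - y"] by simp

lemma nrm_sum: assumes "is_norm nrm" "finite S" shows "nrm (\<Sum>i\<in>S. f i) \<le> (\<Sum>i\<in>S. nrm (f i))"
  using assms(2)
proof (induction S rule: finite_induct)
  case empty then show ?case using nrm_0[OF assms(1)] by simp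
next
  case (insert a F)
  then show ?case using nrm_triangle[OF assms(1), of "f a" "sum f F"] by simp
qed

lemma nrm_upper: assumes "is_norm nrm"
  shows "nrm x \<le> (\<Sum>b\<in>Basis. nrm b) * norm x"
proof -
  have "nrm x = nrm (\<Sum>b\<in>Basis. (x \<bullet> b) *\<^sub>R b)" by (simp add: euclidean_representation)
  also have "\<dots> \<le> (\<Sum>b\<in>Basis. nrm ((x \<bullet> b) *\<^sub>R b))" by (rule nrm_sum[OF assms]) simp
  also have "\<dots> = (\<Sum>b\<in>Basis. \<bar>x \<bullet> b\<bar> * nrm b)" using nrm_scale[OF assms] by simp
  also have "\<dots> \<le> (\<Sum>b\<in>Basis. norm x * nrm b)"
    by (intro sum_mono mult_right_mono) (auto simp: Basis_le_norm nrm_nonneg[OF assms])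
  finally show ?thesis by (simp add: sum_distrib_left mult.commute)
qed

lemma nrm_cont: assumes "is_norm nrm" shows "continuous_on UNIV nrm"
proof -
  define C where "C = (\<Sum>b\<in>Basis. nrm b)"
  have C0: "C \<ge> 0" unfolding C_def by (simp add: sum_nonneg nrm_nonneg[OF assms])
  have "C-lipschitz_on UNIV nrm"
  proof (rule lipschitz_onI[OF _ C0])
    fix x y :: 'a
    have "nrm x \<le> nrm y + nrm (x - y)" using nrm_triangle[OF assms, of y "x - y"] by simp
    moreover have "nrm y \<le> nrm x + nrm (y - x)" using nrm_triangle[OF assms, of x "y - x"] by simp
    moreover have "nrm (x - y) \<le> C * norm (x - y)" "nrm (y - x) \<le> C * norm (x - y)"
      using nrm_upper[OF assms, of "x - y"] nrm_upper[OF assms, of "y - x"] unfolding C_def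
      by (auto simp: norm_minus_commute)
    ultimately show "dist (nrm x) (nrm y) \<le> C * dist x y"
      by (simp add: dist_real_def dist_norm abs_le_iff)
  qed
  then show ?thesis by (rule lipschitz_on_continuous_on)
qed

lemma nrm_lower: assumes "is_norm nrm"
  shows "\<exists>c>0. \<forall>x. c * norm x \<le> nrm x"
proof -
  have ne: "sphere (0::'a) 1 \<noteq> {}" by simp
  obtain z where z: "z \<in> sphere 0 1" and zmin: "\<forall>y\<in>sphere 0 1. nrm z \<le> nrm y"
    using continuous_attains_inf[OF compact_sphere ne continuous_on_subset[OF nrm_cont[OF assms]]] by blast
  have "z \<noteq> 0" using z by auto
  then have c0: "nrm z > 0" using assms nrm_nonneg[OF assms, of z] unfolding is_norm_def
    by (metis less_eq_real_def)
  show ?thesis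
  proof (intro exI[of _ "nrm z"] conjI c0 allI)
    fix x :: 'a
    show "nrm z * norm x \<le> nrm x"
    proof (cases "x = 0")
      case True then show ?thesis using nrm_0[OF assms] by simp
    next
      case False
      then have "(1 / norm x) *\<^sub>R x \<in> sphere 0 1" by simp
      then have "nrm z \<le> nrm ((1 / norm x) *\<^sub>R x)" using zmin by blast
      also have "\<dots> = nrm x / norm x" using nrm_scale[OF assms] by simp
      finally show ?thesis using False by (simp add: field_simps)
    qed
  qed
qed

section \<open>Dual norm\<close>

lemma dual_bdd: assumes "is_norm nrm"
  shows "bdd_above ((\<lambda>x. s \<bullet> x) ` {x. nrm x \<le> 1})"
proof -
  obtain c where c: "c > 0" "\<forall>x. c * norm x \<le> nrm x" using nrm_lower[OF assms] by blast
  show ?thesis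
  proof (rule bdd_aboveI2)
    fix x assume "x \<in> {x. nrm x \<le> 1}"
    then have "c * norm x \<le> 1" using c by (meson mem_Collect_eq order_trans)
    then have "norm x \<le> 1 / c" using c by (simp add: field_simps)
    then have "norm s * norm x \<le> norm s * (1 / c)" by (rule mult_left_mono) simp
    moreover have "s \<bullet> x \<le> norm s * norm x" by (metis Cauchy_Schwarz_ineq2 abs_le_D1)
    ultimately show "s \<bullet> x \<le> norm s / c" by simp
  qed
qed

lemma dual_upper: assumes "is_norm nrm" "nrm x \<le> 1" shows "s \<bullet> x \<le> dual_norm nrm s"
  unfolding dual_norm_def by (rule cSUP_upper[OF _ dual_bdd[OF assms(1)]]) (use assms in auto)

lemma dual_ineq: assumes "is_norm nrm" shows "s \<bullet> x \<le> dual_norm nrm s * nrm x"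
proof (cases "x = 0")
  case True then show ?thesis using nrm_0[OF assms] by simp
next
  case False
  then have p: "nrm x > 0" using assms nrm_nonneg[OF assms, of x] unfolding is_norm_def
    by (metis less_eq_real_def)
  have "nrm ((1 / nrm x) *\<^sub>R x) \<le> 1" using nrm_scale[OF assms] p by simp
  then have "s \<bullet> ((1 / nrm x) *\<^sub>R x) \<le> dual_norm nrm s" by (rule dual_upper[OF assms])
  then show ?thesis using p by (simp add: field_simps)
qed

lemma dual_nonneg: assumes "is_norm nrm" shows "dual_norm nrm s \<ge> 0"
  using dual_upper[OF assms, of 0 s] nrm_0[OF assms] by simp

lemma dual_le: assumes "is_norm nrm" "\<And>x. nrm x \<le> 1 \<Longrightarrow> s \<bullet> x \<le> B"
  shows "dual_norm nrm s \<le> B"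
  unfolding dual_norm_def
  by (rule cSUP_least) (use assms nrm_0[OF assms(1)] in \<open>auto intro: exI[of _ 0]\<close>)

lemma dual_lipschitz: assumes "is_norm nrm"
  shows "\<exists>C\<ge>0. \<forall>s. dual_norm nrm s \<le> C * norm s"
proof -
  obtain c where c: "c > 0" "\<forall>x. c * norm x \<le> nrm x" using nrm_lower[OF assms] by blast
  have "dual_norm nrm s \<le> (1/c) * norm s" for s
  proof (rule dual_le[OF assms])
    fix x assume "nrm x \<le> 1"
    then have "c * norm x \<le> 1" using c by (meson order_trans)
    then have "norm x \<le> 1 / c" using c by (simp add: field_simps)
    then have "norm s * norm x \<le> norm s * (1 / c)" by (rule mult_left_mono) simp
    moreover have "s \<bullet> x \<le> norm s * norm x" by (metis Cauchy_Schwarz_ineq2 abs_le_D1)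
    ultimately show "s \<bullet> x \<le> 1 / c * norm s" by simp
  qed
  then show ?thesis using c by (intro exI[of _ "1/c"]) auto
qed

lemma dual_triangle: assumes "is_norm nrm"
  shows "dual_norm nrm (s + t) \<le> dual_norm nrm s + dual_norm nrm t"
  by (rule dual_le[OF assms]) (use dual_upper[OF assms] in \<open>auto simp: inner_add_left add_mono\<close>)

lemma dual_cont: assumes "is_norm nrm" shows "continuous_on UNIV (dual_norm nrm)"
proof -
  obtain C where C: "C \<ge> 0" "\<forall>s. dual_norm nrm s \<le> C * norm s" using dual_lipschitz[OF assms] by blast
  have "C-lipschitz_on UNIV (dual_norm nrm)"
  proof (rule lipschitz_onI[OF _ C(1)])
    fix x y :: 'a
    have "dual_norm nrm x \<le> dual_norm nrm y + dual_norm nrm (x - y)"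
      using dual_triangle[OF assms, of y "x - y"] by simp
    moreover have "dual_norm nrm y \<le> dual_norm nrm x + dual_norm nrm (y - x)"
      using dual_triangle[OF assms, of x "y - x"] by simp
    moreover have "dual_norm nrm (x - y) \<le> C * norm (x - y)" "dual_norm nrm (y - x) \<le> C * norm (x - y)"
      using C norm_minus_commute by metis+
    ultimately show "dist (dual_norm nrm x) (dual_norm nrm y) \<le> C * dist x y"
      by (simp add: dist_real_def dist_norm abs_le_iff)
  qed
  then show ?thesis by (rule lipschitz_on_continuous_on)
qed

lemma young: fixes a b c :: real assumes "c > 0" shows "a * b \<le> a\<^sup>2 / (2 * c) + c * b\<^sup>2 / 2"
proof -
  have "0 \<le> (a - c * b)\<^sup>2" by simp
  then have "2 * c * (a * b) \<le> a\<^sup>2 + c\<^sup>2 * b\<^sup>2" by (simp add: power2_eq_square algebra_simps)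
  then show ?thesis using assms by (simp add: field_simps power2_eq_square)
qed


section \<open>One-dimensional calculus facts\<close>

lemma line_deriv:
  fixes f :: "'a::euclidean_space \<Rightarrow> real"
  assumes cvx: "convex X" and x: "x \<in> X" and y: "y \<in> X"
    and diff: "\<forall>z\<in>X. (f has_derivative (\<lambda>h. f' z \<bullet> h)) (at z within X)"
    and t: "t \<in> {0..1}"
  shows "((\<lambda>t. f (x + t *\<^sub>R (y - x))) has_real_derivative (f' (x + t *\<^sub>R (y - x)) \<bullet> (y - x)))
           (at t within {0..1})"
proof -
  have img: "(\<lambda>t. x + t *\<^sub>R (y - x)) ` {0..1} \<subseteq> X"
  proof
    fix z assume "z \<in> (\<lambda>t. x + t *\<^sub>R (y - x)) ` {0..1}"
    then obtain s where s: "s \<in> {0..1}" "z = x + s *\<^sub>R (y - x)" by auto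
    have "z = (1 - s) *\<^sub>R x + s *\<^sub>R y" using s by (simp add: algebra_simps)
    then show "z \<in> X" using cvx x y s unfolding convex_def by auto
  qed
  then have zX: "x + t *\<^sub>R (y - x) \<in> X" using t by (meson image_subset_iff)
  have d1: "((\<lambda>t. x + t *\<^sub>R (y - x)) has_derivative (\<lambda>h. h *\<^sub>R (y - x))) (at t within {0..1})"
    by (auto intro!: derivative_eq_intros)
  have d2: "(f has_derivative (\<lambda>h. f' (x + t *\<^sub>R (y - x)) \<bullet> h))
       (at (x + t *\<^sub>R (y - x)) within (\<lambda>t. x + t *\<^sub>R (y - x)) ` {0..1})"
    using has_derivative_subset[OF diff[rule_format, OF zX] img] .
  have "((\<lambda>t. f (x + t *\<^sub>R (y - x))) has_derivative
      (\<lambda>h. f' (x + t *\<^sub>R (y - x)) \<bullet> (h *\<^sub>R (y - x)))) (at t within {0..1})"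
    by (rule has_derivative_in_compose[OF d1 d2])
  moreover have "(\<lambda>h. f' (x + t *\<^sub>R (y - x)) \<bullet> (h *\<^sub>R (y - x))) = (*) (f' (x + t *\<^sub>R (y - x)) \<bullet> (y - x))"
    by (auto simp: mult.commute)
  ultimately show ?thesis unfolding has_field_derivative_def by simp
qed

lemma mvt_le:
  fixes \<phi> \<phi>' :: "real \<Rightarrow> real"
  assumes "\<And>t. t \<in> {0..1} \<Longrightarrow> (\<phi> has_real_derivative \<phi>' t) (at t within {0..1})"
    and "\<And>t. t \<in> {0<..<1} \<Longrightarrow> \<phi>' t \<le> 0"
  shows "\<phi> 1 \<le> \<phi> 0"
proof -
  have cont: "continuous_on {0..1} \<phi>"
    using assms(1) by (intro has_derivative_continuous_on) (auto simp: has_field_derivative_def)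
  have "\<exists>l z. 0 < z \<and> z < 1 \<and> DERIV \<phi> z :> l \<and> \<phi> 1 - \<phi> 0 = (1 - 0) * l"
  proof (rule MVT[OF _ cont])
    fix t :: real assume "0 < t" "t < 1"
    then have "(\<phi> has_real_derivative \<phi>' t) (at t)"
      using assms(1)[of t] at_within_Icc_at[of 0 t 1] by auto
    then show "\<phi> differentiable (at t)" by (auto simp: real_differentiable_def)
  qed simp
  then obtain l z where lz: "0 < z" "z < 1" "DERIV \<phi> z :> l" "\<phi> 1 - \<phi> 0 = l" by auto
  have "DERIV \<phi> z :> \<phi>' z" using assms(1)[of z] at_within_Icc_at[of 0 z 1] lz by auto
  then have "l = \<phi>' z" using lz DERIV_unique by blast
  then show ?thesis using lz assms(2)[of z] by auto
qed

lemma deriv0_bound: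
  fixes \<phi> :: "real \<Rightarrow> real"
  assumes d: "(\<phi> has_real_derivative d) (at 0 within {0..1})"
  shows "(\<And>t. t \<in> {0<..<1} \<Longrightarrow> (\<phi> t - \<phi> 0) / t \<le> B) \<Longrightarrow> d \<le> B"
    and "(\<And>t. t \<in> {0<..<1} \<Longrightarrow> (\<phi> t - \<phi> 0) / t \<ge> B) \<Longrightarrow> d \<ge> B"
proof -
  have F: "at (0::real) within {0..1} = at_right 0" by (rule at_within_Icc_at_right) simp
  have lim: "((\<lambda>y. (\<phi> y - \<phi> 0) / y) \<longlongrightarrow> d) (at_right 0)"
    using d unfolding has_field_derivative_iff F by simp
  have ev: "eventually (\<lambda>x. x \<in> {0<..<1}) (at_right (0::real))" by (rule eventually_at_right_real) simp
  show "(\<And>t. t \<in> {0<..<1} \<Longrightarrow> (\<phi> t - \<phi> 0) / t \<le> B) \<Longrightarrow> d \<le> B"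
    by (rule tendsto_upperbound[OF lim]) (use ev in \<open>auto elim: eventually_mono\<close>)
  show "(\<And>t. t \<in> {0<..<1} \<Longrightarrow> (\<phi> t - \<phi> 0) / t \<ge> B) \<Longrightarrow> d \<ge> B"
    by (rule tendsto_lowerbound[OF lim]) (use ev in \<open>auto elim: eventually_mono\<close>)
qed

lemma descent_lemma:
  fixes f :: "'a::euclidean_space \<Rightarrow> real"
  assumes nrm: "is_norm nrm" and cvx: "convex X" and x: "x \<in> X" and y: "y \<in> X"
    and diff: "\<forall>z\<in>X. (f has_derivative (\<lambda>h. f' z \<bullet> h)) (at z within X)"
    and lip: "\<forall>a\<in>X. \<forall>b\<in>X. dual_norm nrm (f' a - f' b) \<le> L * nrm (a - b)"
  shows "f y \<le> f x + f' x \<bullet> (y - x) + L / 2 * (nrm (y - x))\<^sup>2"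
proof -
  define h where "h = y - x"
  define \<phi> where "\<phi> t = f (x + t *\<^sub>R h) - t * (f' x \<bullet> h) - L / 2 * t\<^sup>2 * (nrm h)\<^sup>2" for t
  define \<phi>' where "\<phi>' t = f' (x + t *\<^sub>R h) \<bullet> h - f' x \<bullet> h - L * t * (nrm h)\<^sup>2" for t
  have "(\<phi> has_real_derivative \<phi>' t) (at t within {0..1})" if t: "t \<in> {0..1}" for t
    unfolding \<phi>_def \<phi>'_def h_def
    by (rule derivative_eq_intros line_deriv[OF cvx x y diff t] refl)+ (simp add: power2_eq_square)
  moreover have "\<phi>' t \<le> 0" if t: "t \<in> {0<..<1}" for t
  proof -
    have zX: "x + t *\<^sub>R h \<in> X"
    proof -
      have "x + t *\<^sub>R h = (1 - t) *\<^sub>R x + t *\<^sub>R y" by (simp add: h_def algebra_simps)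
      then show ?thesis using cvx x y t unfolding convex_def by auto
    qed
    have "f' (x + t *\<^sub>R h) \<bullet> h - f' x \<bullet> h = (f' (x + t *\<^sub>R h) - f' x) \<bullet> h" by (simp add: inner_diff_left)
    also have "\<dots> \<le> dual_norm nrm (f' (x + t *\<^sub>R h) - f' x) * nrm h" by (rule dual_ineq[OF nrm])
    also have "\<dots> \<le> (L * nrm (t *\<^sub>R h)) * nrm h"
      using lip zX x by (intro mult_right_mono nrm_nonneg[OF nrm]) (metis add_diff_cancel_left')
    also have "\<dots> = L * t * (nrm h)\<^sup>2" using t nrm_scale[OF nrm] by (simp add: power2_eq_square)
    finally show ?thesis unfolding \<phi>'_def by simp
  qed
  ultimately have "\<phi> 1 \<le> \<phi> 0" by (rule mvt_le)
  then show ?thesis unfolding \<phi>_def h_def by simp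
qed

lemma breg_lower:
  fixes th :: "'a::euclidean_space \<Rightarrow> real"
  assumes nrm: "is_norm nrm"
    and th_deriv: "\<forall>x. (th has_derivative (\<lambda>h. gth x \<bullet> h)) (at x)"
    and th_strong: "\<forall>x x'. (gth x - gth x') \<bullet> (x - x') \<ge> (nrm (x - x'))\<^sup>2"
  shows "th y - th x - gth x \<bullet> (y - x) \<ge> 1/2 * (nrm (y - x))\<^sup>2"
proof -
  define h where "h = y - x"
  have diff: "\<forall>z\<in>UNIV. (th has_derivative (\<lambda>h. gth z \<bullet> h)) (at z within UNIV)" using th_deriv by simp
  define \<phi> where "\<phi> t = - th (x + t *\<^sub>R h) + t * (gth x \<bullet> h) + 1 / 2 * t\<^sup>2 * (nrm h)\<^sup>2" for t
  define \<phi>' where "\<phi>' t = - (gth (x + t *\<^sub>R h) \<bullet> h) + gth x \<bullet> h + t * (nrm h)\<^sup>2" for t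
  have "(\<phi> has_real_derivative \<phi>' t) (at t within {0..1})" if t: "t \<in> {0..1}" for t
    unfolding \<phi>_def \<phi>'_def h_def
    by (rule derivative_eq_intros line_deriv[OF convex_UNIV _ _ diff t] refl UNIV_I)+ (simp add: power2_eq_square)
  moreover have "\<phi>' t \<le> 0" if t: "t \<in> {0<..<1}" for t
  proof -
    have "(nrm (t *\<^sub>R h))\<^sup>2 \<le> (gth (x + t *\<^sub>R h) - gth x) \<bullet> (t *\<^sub>R h)"
      using th_strong[rule_format, of "x + t *\<^sub>R h" x] by simp
    then have "t * (t * (nrm h)\<^sup>2) \<le> t * ((gth (x + t *\<^sub>R h) - gth x) \<bullet> h)"
      using t nrm_scale[OF nrm] by (simp add: power2_eq_square algebra_simps)
    then have "t * (nrm h)\<^sup>2 \<le> (gth (x + t *\<^sub>R h) - gth x) \<bullet> h" using t by simp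
    then show ?thesis unfolding \<phi>'_def by (simp add: inner_diff_left)
  qed
  ultimately have "\<phi> 1 \<le> \<phi> 0" by (rule mvt_le)
  then show ?thesis unfolding \<phi>_def h_def by simp
qed

lemma grad_ineq:
  fixes f :: "'a::euclidean_space \<Rightarrow> real"
  assumes cvx: "convex X" and x: "x \<in> X" and y: "y \<in> X"
    and diff: "\<forall>z\<in>X. (f has_derivative (\<lambda>h. f' z \<bullet> h)) (at z within X)"
    and fc: "convex_on X f"
  shows "f y \<ge> f x + f' x \<bullet> (y - x)"
proof -
  have d: "((\<lambda>t. f (x + t *\<^sub>R (y - x))) has_real_derivative (f' x \<bullet> (y - x))) (at 0 within {0..1})"
    using line_deriv[OF cvx x y diff, of 0] by simp
  have "f' x \<bullet> (y - x) \<le> f y - f x"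
  proof (rule deriv0_bound(1)[OF d])
    fix t :: real assume t: "t \<in> {0<..<1}"
    have "x + t *\<^sub>R (y - x) = (1 - t) *\<^sub>R x + t *\<^sub>R y" by (simp add: algebra_simps)
    moreover have "f ((1 - t) *\<^sub>R x + t *\<^sub>R y) \<le> (1 - t) * f x + t * f y"
      using fc x y t unfolding convex_on_def by auto
    ultimately have "f (x + t *\<^sub>R (y - x)) - f x \<le> t * (f y - f x)" by (simp add: algebra_simps)
    then show "(f (x + t *\<^sub>R (y - x)) - f (x + 0 *\<^sub>R (y - x))) / t \<le> f y - f x"
      using t by (simp add: field_simps)
  qed
  then show ?thesis by simp
qed

lemma opt_cond:
  fixes f :: "'a::euclidean_space \<Rightarrow> real"
  assumes cvx: "convex X" and x: "xs \<in> X" and y: "y \<in> X"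
    and diff: "\<forall>z\<in>X. (f has_derivative (\<lambda>h. f' z \<bullet> h)) (at z within X)"
    and min: "\<forall>z\<in>X. f xs \<le> f z"
  shows "f' xs \<bullet> (y - xs) \<ge> 0"
proof -
  have d: "((\<lambda>t. f (xs + t *\<^sub>R (y - xs))) has_real_derivative (f' xs \<bullet> (y - xs))) (at 0 within {0..1})"
    using line_deriv[OF cvx x y diff, of 0] by simp
  show ?thesis
  proof (rule deriv0_bound(2)[OF d])
    fix t :: real assume t: "t \<in> {0<..<1}"
    have "xs + t *\<^sub>R (y - xs) = (1 - t) *\<^sub>R xs + t *\<^sub>R y" by (simp add: algebra_simps)
    then have "xs + t *\<^sub>R (y - xs) \<in> X" using cvx x y t unfolding convex_def by auto
    then have "f (xs + t *\<^sub>R (y - xs)) - f xs \<ge> 0" using min by auto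
    then show "(f (xs + t *\<^sub>R (y - xs)) - f (xs + 0 *\<^sub>R (y - xs))) / t \<ge> 0" using t by simp
  qed
qed


lemma quad_bound:
  fixes A B K d :: real
  assumes "B > 0" "A \<ge> 0" "d \<ge> 0" "B * d\<^sup>2 - A * d \<le> K"
  shows "d \<le> max 1 ((A + \<bar>K\<bar>) / B)"
proof (rule ccontr)
  assume "\<not> ?thesis"
  then have d1: "d > 1" and d2: "d > (A + \<bar>K\<bar>) / B" by auto
  from d2 assms(1) have "B * d > A + \<bar>K\<bar>" by (simp add: field_simps)
  then have p: "B * d - A > \<bar>K\<bar>" by simp
  then have "d * (B * d - A) > 1 * (B * d - A)" using d1 by (intro mult_strict_right_mono) auto
  then have "B * d\<^sup>2 - A * d > \<bar>K\<bar>" using p by (simp add: power2_eq_square algebra_simps)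
  then show False using assms(4) by simp
qed

locale proxsetup =
  fixes nrm :: "'e::euclidean_space \<Rightarrow> real" and th :: "'e \<Rightarrow> real" and gth :: "'e \<Rightarrow> 'e"
    and X :: "'e set" and \<beta> :: real
  assumes nrm: "is_norm nrm"
    and th_deriv: "\<forall>x. (th has_derivative (\<lambda>h. gth x \<bullet> h)) (at x)"
    and th_C1: "continuous_on UNIV gth"
    and th_strong: "\<forall>x x'. (gth x - gth x') \<bullet> (x - x') \<ge> (nrm (x - x'))\<^sup>2"
    and th0: "th 0 = 0"
    and Xcvx: "convex X" and Xcl: "closed X" and Xne: "X \<noteq> {}"
    and beta: "\<beta> > 0"
begin

definition J :: "'e \<Rightarrow> 'e \<Rightarrow> 'e \<Rightarrow> real" where
  "J c a z = c \<bullet> z + \<beta> * th (z - a)"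

definition Pm :: "'e \<Rightarrow> 'e \<Rightarrow> 'e" where
  "Pm c a = (SOME z. z \<in> X \<and> (\<forall>y\<in>X. J c a z \<le> J c a y))"

lemma th_cont: "continuous_on UNIV th"
  by (rule has_derivative_continuous_on) (use th_deriv in auto)

lemma J_cont: "continuous_on UNIV (J c a)"
  unfolding J_def
  by (intro continuous_intros continuous_on_compose2[OF th_cont]) auto

lemma J_deriv: "(J c a has_derivative (\<lambda>h. (c + \<beta> *\<^sub>R gth (z - a)) \<bullet> h)) (at z)"
proof -
  have d1: "((\<lambda>z. z - a) has_derivative (\<lambda>h. h)) (at z)" by (auto intro!: derivative_eq_intros)
  have "((\<lambda>z. th (z - a)) has_derivative (\<lambda>h. gth (z - a) \<bullet> h)) (at z)"
    using has_derivative_compose[OF d1 th_deriv[rule_format, of "z - a"]] by simp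
  then have "(J c a has_derivative (\<lambda>h. c \<bullet> h + \<beta> * (gth (z - a) \<bullet> h))) (at z)"
    unfolding J_def by (auto intro!: derivative_eq_intros)
  then show ?thesis by (simp add: inner_add_left)
qed

lemma c0_ex: obtains c0 where "c0 > 0" "\<And>x. c0 * norm x \<le> nrm x"
  using nrm_lower[OF nrm] by blast

lemma Pm_ex: "\<exists>z. z \<in> X \<and> (\<forall>y\<in>X. J c a z \<le> J c a y)"
proof -
  obtain z0 where z0: "z0 \<in> X" using Xne by auto
  obtain c0 where c0: "c0 > 0" "\<And>x. c0 * norm x \<le> nrm x" using c0_ex by blast
  define K where "K = X \<inter> {z. J c a z \<le> J c a z0}"
  have cl: "closed K" unfolding K_def
    by (intro closed_Int Xcl closed_Collect_le J_cont continuous_on_const)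
  define A where "A = norm c + \<beta> * norm (gth 0)"
  define B where "B = \<beta> * c0\<^sup>2 / 2"
  define K0 where "K0 = J c a z0 - c \<bullet> a"
  have A0: "A \<ge> 0" unfolding A_def using beta by auto
  have B0: "B > 0" unfolding B_def using beta c0 by auto
  have bd: "norm z \<le> norm a + max 1 ((A + \<bar>K0\<bar>) / B)" if z: "z \<in> K" for z
  proof -
    define w where "w = z - a"
    define d where "d = norm w"
    have "th w - th 0 - gth 0 \<bullet> (w - 0) \<ge> 1/2 * (nrm (w - 0))\<^sup>2"
      by (rule breg_lower[OF nrm th_deriv th_strong])
    then have thw: "th w \<ge> gth 0 \<bullet> w + 1/2 * (nrm w)\<^sup>2" using th0 by simp
    have "gth 0 \<bullet> w \<ge> - (norm (gth 0) * d)" unfolding d_def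
      by (metis Cauchy_Schwarz_ineq2 abs_le_D1 minus_le_iff inner_minus_left norm_minus_cancel)
    moreover have "(nrm w)\<^sup>2 \<ge> (c0 * d)\<^sup>2" unfolding d_def
      using c0(2)[of w] c0(1) by (intro power_mono) auto
    ultimately have th2: "th w \<ge> - (norm (gth 0) * d) + 1/2 * (c0 * d)\<^sup>2" using thw by linarith
    have cw: "c \<bullet> w \<ge> - (norm c * d)" unfolding d_def
      by (metis Cauchy_Schwarz_ineq2 abs_le_D1 minus_le_iff inner_minus_left norm_minus_cancel)
    have "J c a z = c \<bullet> a + c \<bullet> w + \<beta> * th w" unfolding J_def w_def by (simp add: inner_diff_right)
    also have "\<dots> \<ge> c \<bullet> a - norm c * d + \<beta> * (- (norm (gth 0) * d) + 1/2 * (c0 * d)\<^sup>2)"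
      using cw th2 beta by (intro add_mono mult_left_mono) auto
    finally have "B * d\<^sup>2 - A * d \<le> K0" using z unfolding K_def K0_def A_def B_def
      by (simp add: power2_eq_square algebra_simps)
    then have "d \<le> max 1 ((A + \<bar>K0\<bar>) / B)" by (intro quad_bound[OF B0 A0]) (auto simp: d_def)
    moreover have "norm z \<le> norm a + d" unfolding d_def w_def by (metis norm_triangle_sub add.commute)
    ultimately show ?thesis by simp
  qed
  have "bounded K" unfolding bounded_iff using bd by blast
  then have cpt: "compact K" using cl by (simp add: compact_eq_bounded_closed)
  have Kne: "K \<noteq> {}" using z0 unfolding K_def by auto
  obtain zm where zm: "zm \<in> K" "\<forall>y\<in>K. J c a zm \<le> J c a y"
    using continuous_attains_inf[OF cpt Kne continuous_on_subset[OF J_cont]] by blast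
  show ?thesis
  proof (intro exI conjI ballI)
    show "zm \<in> X" using zm unfolding K_def by auto
    fix y assume y: "y \<in> X"
    show "J c a zm \<le> J c a y"
    proof (cases "y \<in> K")
      case True then show ?thesis using zm by auto
    next
      case False
      then have "J c a y > J c a z0" using y unfolding K_def by auto
      moreover have "J c a zm \<le> J c a z0" using zm unfolding K_def by auto
      ultimately show ?thesis by simp
    qed
  qed
qed

lemma Pm_min: "Pm c a \<in> X" "\<forall>y\<in>X. J c a (Pm c a) \<le> J c a y"
  using someI_ex[OF Pm_ex[of c a]] unfolding Pm_def by auto

lemma Pm_foc: "y \<in> X \<Longrightarrow> (c + \<beta> *\<^sub>R gth (Pm c a - a)) \<bullet> (y - Pm c a) \<ge> 0"
  by (rule opt_cond[OF Xcvx Pm_min(1) _ _ Pm_min(2)]) (auto intro: has_derivative_at_withinI J_deriv)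

lemma Pm_bound:
  obtains c0 where "c0 > 0" "\<And>c1 a1 c2 a2. norm (Pm c1 a1 - Pm c2 a2) \<le>
     (norm (c1 - c2) + \<beta> * norm (gth (Pm c2 a2 - a1) - gth (Pm c2 a2 - a2))) / (\<beta> * c0\<^sup>2)"
proof -
  obtain c0 where c0: "c0 > 0" "\<And>x. c0 * norm x \<le> nrm x" using c0_ex by blast
  have "norm (Pm c1 a1 - Pm c2 a2) \<le>
     (norm (c1 - c2) + \<beta> * norm (gth (Pm c2 a2 - a1) - gth (Pm c2 a2 - a2))) / (\<beta> * c0\<^sup>2)" for c1 a1 c2 a2
  proof -
    define z1 where "z1 = Pm c1 a1"
    define z2 where "z2 = Pm c2 a2"
    define D where "D = norm (z1 - z2)"
    have f1: "(c1 + \<beta> *\<^sub>R gth (z1 - a1)) \<bullet> (z2 - z1) \<ge> 0" unfolding z1_def z2_def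
      by (rule Pm_foc) (rule Pm_min)
    have f2: "(c2 + \<beta> *\<^sub>R gth (z2 - a2)) \<bullet> (z1 - z2) \<ge> 0" unfolding z1_def z2_def
      by (rule Pm_foc) (rule Pm_min)
    have st: "(gth (z1 - a1) - gth (z2 - a1)) \<bullet> (z1 - z2) \<ge> (nrm (z1 - z2))\<^sup>2"
      using th_strong[rule_format, of "z1 - a1" "z2 - a1"] by simp
    have "(nrm (z1 - z2))\<^sup>2 \<ge> (c0 * D)\<^sup>2" unfolding D_def
      using c0(2)[of "z1 - z2"] c0(1) by (intro power_mono) auto
    have sum: "0 \<le> (c1 - c2) \<bullet> (z2 - z1) - \<beta> * ((gth (z1 - a1) - gth (z2 - a1)) \<bullet> (z1 - z2))
        + \<beta> * ((gth (z2 - a1) - gth (z2 - a2)) \<bullet> (z2 - z1))"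
      using add_nonneg_nonneg[OF f1 f2]
      by (simp add: inner_add_left inner_diff_left inner_diff_right algebra_simps)
    have e1: "(c1 - c2) \<bullet> (z2 - z1) \<le> norm (c1 - c2) * D" unfolding D_def
      by (metis Cauchy_Schwarz_ineq2 abs_le_D1 norm_minus_commute)
    have e2: "(gth (z2 - a1) - gth (z2 - a2)) \<bullet> (z2 - z1) \<le> norm (gth (z2 - a1) - gth (z2 - a2)) * D"
      unfolding D_def by (metis Cauchy_Schwarz_ineq2 abs_le_D1 norm_minus_commute)
    have "\<beta> * (c0 * D)\<^sup>2 \<le> \<beta> * ((gth (z1 - a1) - gth (z2 - a1)) \<bullet> (z1 - z2))"
      using st \<open>(nrm (z1 - z2))\<^sup>2 \<ge> (c0 * D)\<^sup>2\<close> beta by (intro mult_left_mono) auto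
    then have "\<beta> * (c0 * D)\<^sup>2 \<le> norm (c1 - c2) * D + \<beta> * (norm (gth (z2 - a1) - gth (z2 - a2)) * D)"
      using sum e1 mult_left_mono[OF e2, of \<beta>] beta by linarith
    then have "D * (\<beta> * c0\<^sup>2 * D) \<le> D * (norm (c1 - c2) + \<beta> * norm (gth (z2 - a1) - gth (z2 - a2)))"
      by (simp add: power2_eq_square algebra_simps)
    then have "\<beta> * c0\<^sup>2 * D \<le> norm (c1 - c2) + \<beta> * norm (gth (z2 - a1) - gth (z2 - a2))"
    proof (cases "D = 0")
      case True then show ?thesis using beta by simp
    next
      case False then have "D > 0" unfolding D_def by simp
      then show ?thesis using \<open>D * _ \<le> D * _\<close> by (simp add: mult_le_cancel_left)
    qed
    then show ?thesis using beta c0 unfolding D_def z1_def z2_def by (simp add: field_simps)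
  qed
  then show ?thesis using that c0 by blast
qed

lemma Pm_cont: "continuous_on UNIV (\<lambda>p. Pm (fst p) (snd p))"
proof -
  obtain c0 where c0: "c0 > 0" "\<And>c1 a1 c2 a2. norm (Pm c1 a1 - Pm c2 a2) \<le>
     (norm (c1 - c2) + \<beta> * norm (gth (Pm c2 a2 - a1) - gth (Pm c2 a2 - a2))) / (\<beta> * c0\<^sup>2)"
    using Pm_bound by blast
  have "isCont (\<lambda>p. Pm (fst p) (snd p)) q" for q :: "'e \<times> 'e"
  proof -
    obtain c2 a2 where q: "q = (c2, a2)" by fastforce
    define z2 where "z2 = Pm c2 a2"
    have gc: "isCont gth (z2 - a2)" using th_C1 by (simp add: continuous_on_eq_continuous_at)
    have "((\<lambda>p. (norm (fst p - c2) + \<beta> * norm (gth (z2 - snd p) - gth (z2 - a2))) / (\<beta> * c0\<^sup>2))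
        \<longlongrightarrow> (norm (c2 - c2) + \<beta> * norm (gth (z2 - a2) - gth (z2 - a2))) / (\<beta> * c0\<^sup>2)) (at q)"
      unfolding q
      using beta c0(1) by (intro tendsto_intros isCont_tendsto_compose[OF gc]) (auto intro!: tendsto_eq_intros)
    then have lim0: "((\<lambda>p. (norm (fst p - c2) + \<beta> * norm (gth (z2 - snd p) - gth (z2 - a2))) / (\<beta> * c0\<^sup>2))
        \<longlongrightarrow> 0) (at q)" by simp
    have "((\<lambda>p. Pm (fst p) (snd p) - z2) \<longlongrightarrow> 0) (at q)"
      by (rule Lim_null_comparison[OF _ lim0]) (use c0(2) in \<open>auto simp: z2_def\<close>)
    then show ?thesis unfolding isCont_def q z2_def by (simp add: Lim_null[symmetric])
  qed
  then show ?thesis by (simp add: continuous_at_imp_continuous_on)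
qed

lemma prox_eq: "prox th gth X \<beta> u x x0 = Pm (u - \<beta> *\<^sub>R gth (x - x0)) x0"
proof -
  let ?c = "u - \<beta> *\<^sub>R gth (x - x0)"
  have key: "u \<bullet> z + \<beta> * bregman th gth x0 x z = J ?c x0 z + (\<beta> * (gth (x - x0) \<bullet> x) - \<beta> * th (x - x0))" for z
    unfolding bregman_def J_def by (simp add: algebra_simps inner_diff_right inner_diff_left)
  have "(\<lambda>z. z \<in> X \<and> (\<forall>y\<in>X. u \<bullet> z + \<beta> * bregman th gth x0 x z \<le> u \<bullet> y + \<beta> * bregman th gth x0 x y))
      = (\<lambda>z. z \<in> X \<and> (\<forall>y\<in>X. J ?c x0 z \<le> J ?c x0 y))"
    unfolding key by simp
  then show ?thesis unfolding prox_def Pm_def by simp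
qed

lemma prox_in: "prox th gth X \<beta> u x x0 \<in> X"
  unfolding prox_eq by (rule Pm_min)

lemma three_point:
  assumes y: "y \<in> X" and z_def: "z = prox th gth X \<beta> u x x0"
  shows "u \<bullet> (z - y) \<le> \<beta> * (bregman th gth x0 x y - bregman th gth x0 z y - bregman th gth x0 x z)"
proof -
  have foc: "(u - \<beta> *\<^sub>R gth (x - x0) + \<beta> *\<^sub>R gth (z - x0)) \<bullet> (y - z) \<ge> 0"
    unfolding z_def prox_eq by (rule Pm_foc[OF y])
  have id: "bregman th gth x0 x y - bregman th gth x0 z y - bregman th gth x0 x z
      = (gth (z - x0) - gth (x - x0)) \<bullet> (y - z)"
    unfolding bregman_def by (simp add: algebra_simps inner_diff_right inner_diff_left)
  show ?thesis unfolding id using foc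
    by (simp add: inner_add_left inner_diff_left inner_diff_right algebra_simps)
qed

lemma bregman_lower: "bregman th gth x0 x z \<ge> 1/2 * (nrm (z - x))\<^sup>2"
  unfolding bregman_def using breg_lower[OF nrm th_deriv th_strong, of "z - x0" "x - x0"] by simp

lemma prox_meas:
  assumes "u \<in> borel_measurable M" "x \<in> borel_measurable M" "x0 \<in> borel_measurable M"
  shows "(\<lambda>s. prox th gth X \<beta> (u s) (x s) (x0 s)) \<in> borel_measurable M"
proof -
  have gm: "gth \<in> borel_measurable borel" using th_C1 by (rule borel_measurable_continuous_onI)
  have cm: "(\<lambda>s. u s - \<beta> *\<^sub>R gth (x s - x0 s)) \<in> borel_measurable M"
    using assms by (intro borel_measurable_diff borel_measurable_scaleR measurable_compose[OF _ gm]) auto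
  have pm: "(\<lambda>s. (u s - \<beta> *\<^sub>R gth (x s - x0 s), x0 s)) \<in> borel_measurable M"
    using cm assms(3) by (intro borel_measurable_Pair)
  have "(\<lambda>s. Pm (fst (u s - \<beta> *\<^sub>R gth (x s - x0 s), x0 s)) (snd (u s - \<beta> *\<^sub>R gth (x s - x0 s), x0 s)))
     \<in> borel_measurable M"
    by (rule borel_measurable_continuous_on[OF Pm_cont pm])
  then show ?thesis unfolding prox_eq by simp
qed

end


context prob_space
begin

definition indep2 :: "'b measure \<Rightarrow> ('a \<Rightarrow> 'b) \<Rightarrow> 'c measure \<Rightarrow> ('a \<Rightarrow> 'c) \<Rightarrow> bool" where
  "indep2 S Y T W \<longleftrightarrow> Y \<in> measurable M S \<and> W \<in> measurable M T \<and>
     (\<forall>a\<in>sets S. \<forall>b\<in>sets T. prob (Y -` a \<inter> W -` b \<inter> space M) = prob (Y -` a \<inter> space M) * prob (W -` b \<inter> space M))"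

lemma indep2_distr:
  assumes ind: "indep2 S Y T W" and dW: "distr M T W = T" and Tp: "prob_space T"
  shows "distr M (S \<Otimes>\<^sub>M T) (\<lambda>x. (Y x, W x)) = distr M S Y \<Otimes>\<^sub>M T"
proof -
  have Y: "Y \<in> measurable M S" and W: "W \<in> measurable M T" using ind unfolding indep2_def by auto
  interpret Tp: prob_space T by (rule Tp)
  interpret D: prob_space "distr M S Y" by (rule prob_space_distr[OF Y])
  show ?thesis
  proof (rule pair_measure_eqI[symmetric])
    show "sigma_finite_measure (distr M S Y)" "sigma_finite_measure T"
      by (rule D.sigma_finite_measure_axioms Tp.sigma_finite_measure_axioms)+
    show "sets (distr M S Y \<Otimes>\<^sub>M T) = sets (distr M (S \<Otimes>\<^sub>M T) (\<lambda>x. (Y x, W x)))"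
      by (simp add: sets_pair_measure)
    fix A B assume A: "A \<in> sets (distr M S Y)" and B: "B \<in> sets T"
    have A': "A \<in> sets S" using A by simp
    have pm: "(\<lambda>x. (Y x, W x)) \<in> measurable M (S \<Otimes>\<^sub>M T)" using Y W by measurable
    have "emeasure (distr M (S \<Otimes>\<^sub>M T) (\<lambda>x. (Y x, W x))) (A \<times> B) = emeasure M ((\<lambda>x. (Y x, W x)) -` (A \<times> B) \<inter> space M)"
      by (rule emeasure_distr[OF pm]) (use A' B in simp)
    also have "(\<lambda>x. (Y x, W x)) -` (A \<times> B) \<inter> space M = Y -` A \<inter> W -` B \<inter> space M" by auto
    also have "emeasure M (Y -` A \<inter> W -` B \<inter> space M) = ennreal (prob (Y -` A \<inter> space M) * prob (W -` B \<inter> space M))"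
      using ind A' B unfolding indep2_def by (simp add: emeasure_eq_measure)
    also have "\<dots> = emeasure (distr M S Y) A * emeasure T B"
    proof -
      have "emeasure (distr M S Y) A = emeasure M (Y -` A \<inter> space M)" by (rule emeasure_distr[OF Y A'])
      moreover have "emeasure T B = emeasure (distr M T W) B" using dW by simp
      moreover have "emeasure (distr M T W) B = emeasure M (W -` B \<inter> space M)" by (rule emeasure_distr[OF W B])
      ultimately show ?thesis by (simp add: emeasure_eq_measure ennreal_mult)
    qed
    finally show "emeasure (distr M S Y) A * emeasure T B = emeasure (distr M (S \<Otimes>\<^sub>M T) (\<lambda>x. (Y x, W x))) (A \<times> B)" ..
  qed
qed

lemma indep_transfer_nn:
  fixes f :: "'e::euclidean_space \<times> 'w \<Rightarrow> ennreal" and P :: "'w measure" and Y :: "'a \<Rightarrow> 'e" and W :: "'a \<Rightarrow> 'w"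
  assumes ind: "indep2 borel Y P W" and dW: "distr M P W = P" and Pp: "prob_space P"
    and f: "f \<in> borel_measurable (borel \<Otimes>\<^sub>M P)"
  shows "(\<integral>\<^sup>+ s. f (Y s, W s) \<partial>M) = (\<integral>\<^sup>+ s. (\<integral>\<^sup>+ \<omega>. f (Y s, \<omega>) \<partial>P) \<partial>M)"
proof -
  have Y: "Y \<in> measurable M borel" and W: "W \<in> measurable M P" using ind unfolding indep2_def by auto
  have d: "distr M (borel \<Otimes>\<^sub>M P) (\<lambda>x. (Y x, W x)) = distr M borel Y \<Otimes>\<^sub>M P" by (rule indep2_distr[OF ind dW Pp])
  interpret Ps: prob_space P by (rule Pp)
  have pm: "(\<lambda>x. (Y x, W x)) \<in> measurable M (borel \<Otimes>\<^sub>M P)" using Y W by measurable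
  have "(\<integral>\<^sup>+ s. f (Y s, W s) \<partial>M) = integral\<^sup>N (distr M (borel \<Otimes>\<^sub>M P) (\<lambda>x. (Y x, W x))) f"
    by (rule nn_integral_distr[symmetric]) (use pm f in auto)
  also have "\<dots> = integral\<^sup>N (distr M borel Y \<Otimes>\<^sub>M P) f" using d by simp
  also have "\<dots> = (\<integral>\<^sup>+ y. \<integral>\<^sup>+ \<omega>. f (y, \<omega>) \<partial>P \<partial>distr M borel Y)"
    by (rule Ps.nn_integral_fst[symmetric]) (use f in simp)
  also have "\<dots> = (\<integral>\<^sup>+ s. (\<integral>\<^sup>+ \<omega>. f (Y s, \<omega>) \<partial>P) \<partial>M)"
    by (rule nn_integral_distr) (use Y f Ps.borel_measurable_nn_integral_fst[of f borel] in auto)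
  finally show ?thesis .
qed

lemma indep_transfer_int:
  fixes f :: "'e::euclidean_space \<times> 'w \<Rightarrow> real" and P :: "'w measure" and Y :: "'a \<Rightarrow> 'e" and W :: "'a \<Rightarrow> 'w"
  assumes ind: "indep2 borel Y P W" and dW: "distr M P W = P" and Pp: "prob_space P"
    and f: "f \<in> borel_measurable (borel \<Otimes>\<^sub>M P)"
    and int: "integrable M (\<lambda>s. f (Y s, W s))"
  shows "(\<integral> s. f (Y s, W s) \<partial>M) = (\<integral> s. (\<integral> \<omega>. f (Y s, \<omega>) \<partial>P) \<partial>M)"
proof -
  have Y: "Y \<in> measurable M borel" and W: "W \<in> measurable M P" using ind unfolding indep2_def by auto
  have d: "distr M (borel \<Otimes>\<^sub>M P) (\<lambda>x. (Y x, W x)) = distr M borel Y \<Otimes>\<^sub>M P" by (rule indep2_distr[OF ind dW Pp])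
  interpret Ps: prob_space P by (rule Pp)
  interpret D: prob_space "distr M borel Y" by (rule prob_space_distr) (use Y in auto)
  interpret DP: pair_sigma_finite "distr M borel Y" P
    unfolding pair_sigma_finite_def using D.sigma_finite_measure_axioms Ps.sigma_finite_measure_axioms by auto
  have pm: "(\<lambda>x. (Y x, W x)) \<in> measurable M (borel \<Otimes>\<^sub>M P)" using Y W by measurable
  have i2: "integrable (distr M (borel \<Otimes>\<^sub>M P) (\<lambda>x. (Y x, W x))) f"
    using int by (subst integrable_distr_eq[OF pm f]) simp
  then have i3: "integrable (distr M borel Y \<Otimes>\<^sub>M P) f" using d by simp
  have "(\<integral> s. f (Y s, W s) \<partial>M) = integral\<^sup>L (distr M (borel \<Otimes>\<^sub>M P) (\<lambda>x. (Y x, W x))) f"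
    by (rule integral_distr[symmetric, OF pm f])
  also have "\<dots> = integral\<^sup>L (distr M borel Y \<Otimes>\<^sub>M P) f" using d by simp
  also have "\<dots> = (\<integral> y. \<integral> \<omega>. f (y, \<omega>) \<partial>P \<partial>distr M borel Y)"
    by (rule DP.integral_fst'[symmetric, OF i3])
  also have "\<dots> = (\<integral> s. (\<integral> \<omega>. f (Y s, \<omega>) \<partial>P) \<partial>M)"
    by (rule integral_distr) (use Y f Ps.borel_measurable_lebesgue_integral[of "\<lambda>x y. f (x, y)" borel] in auto)
  finally show ?thesis .
qed

end


context prob_space
begin

definition Efam :: "('a \<Rightarrow> 'e::euclidean_space) \<Rightarrow> (nat \<Rightarrow> 'a \<Rightarrow> 'w) \<Rightarrow> 'w measure \<Rightarrow> nat option \<Rightarrow> 'a set set" where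
  "Efam x0 om P i = (case i of None \<Rightarrow> {x0 -` A \<inter> space M | A. A \<in> sets borel}
                      | Some j \<Rightarrow> {om j -` A \<inter> space M | A. A \<in> sets P})"

lemma Efam_indep:
  fixes om :: "nat \<Rightarrow> 'a \<Rightarrow> 'w" and x0 :: "'a \<Rightarrow> 'e::euclidean_space" and P :: "'w measure"
  assumes om_meas: "\<forall>i. om i \<in> measurable M P"
    and om_indep: "indep_vars (\<lambda>_. P) om UNIV"
    and x0_meas: "x0 \<in> borel_measurable M"
    and x0_indep: "indep_set (sets (vimage_algebra (space M) x0 borel))
                      (sets (vimage_algebra (space M) (\<lambda>s i. om i s) (Pi\<^sub>M UNIV (\<lambda>_. P))))"
  shows "indep_sets (Efam x0 om P) UNIV"
proof (rule indep_setsI)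
  fix i :: "nat option"
  show "Efam x0 om P i \<subseteq> events"
  proof (cases i)
    case None then show ?thesis using x0_meas by (auto simp: Efam_def)
  next
    case (Some j) then show ?thesis using measurable_sets[OF om_meas[rule_format, of j]] by (auto simp: Efam_def)
  qed
next
  fix A :: "nat option \<Rightarrow> 'a set" and J :: "nat option set"
  assume Jne: "J \<noteq> {}" and "J \<subseteq> UNIV" and Jfin: "finite J" and A: "\<forall>j\<in>J. A j \<in> Efam x0 om P j"
  define J' where "J' = Some -` J"
  have J'fin: "finite J'" unfolding J'_def using Jfin by (rule finite_vimageI) auto
  have Jsplit: "J = (if None \<in> J then insert None (Some ` J') else Some ` J')"
    unfolding J'_def
    by (auto simp: image_iff) (metis option.exhaust)+
  have omi: "indep_sets (\<lambda>i. {om i -` A \<inter> space M |A. A \<in> sets P}) UNIV"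
    using om_indep unfolding indep_vars_def2 by auto
  have AS: "\<forall>j\<in>J'. A (Some j) \<in> {om j -` A \<inter> space M |A. A \<in> sets P}"
    using A unfolding J'_def Efam_def by auto
  have probB: "prob (\<Inter>j\<in>J'. A (Some j)) = (\<Prod>j\<in>J'. prob (A (Some j)))" if "J' \<noteq> {}"
    by (rule indep_setsD[OF omi _ that J'fin AS]) simp
  have "\<forall>j\<in>J'. \<exists>C. C \<in> sets P \<and> A (Some j) = om j -` C \<inter> space M" using AS by blast
  from bchoice[OF this] obtain C where C: "\<forall>j\<in>J'. C j \<in> sets P \<and> A (Some j) = om j -` C j \<inter> space M"
    by blast
  have Bmeas: "(\<Inter>j\<in>J'. A (Some j)) \<in> sets (vimage_algebra (space M) (\<lambda>s i. om i s) (Pi\<^sub>M UNIV (\<lambda>_. P)))"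
    if "J' \<noteq> {}"
  proof -
    define Q where "Q = (\<Inter>j\<in>J'. (\<lambda>f. f j) -` C j \<inter> space (Pi\<^sub>M UNIV (\<lambda>_::nat. P)))"
    have Q: "Q \<in> sets (Pi\<^sub>M UNIV (\<lambda>_::nat. P))" unfolding Q_def
    proof (rule sets.finite_INT[OF J'fin that])
      fix j assume "j \<in> J'"
      then have "C j \<in> sets P" using C by auto
      moreover have "(\<lambda>f. f j) \<in> measurable (Pi\<^sub>M UNIV (\<lambda>_::nat. P)) P"
        by (rule measurable_component_singleton) simp
      ultimately show "(\<lambda>f. f j) -` C j \<inter> space (Pi\<^sub>M UNIV (\<lambda>_::nat. P)) \<in> sets (Pi\<^sub>M UNIV (\<lambda>_::nat. P))"
        by (rule measurable_sets[rotated])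
    qed
    have "(\<Inter>j\<in>J'. A (Some j)) = (\<lambda>s i. om i s) -` Q \<inter> space M"
    proof -
      have sp: "s \<in> space M \<Longrightarrow> (\<lambda>i. om i s) \<in> space (Pi\<^sub>M UNIV (\<lambda>_::nat. P))" for s
        using measurable_space[OF om_meas[rule_format]] by (auto simp: space_PiM)
      show ?thesis unfolding Q_def using C that sp by auto
    qed
    then show ?thesis using in_vimage_algebra[OF Q] by simp
  qed
  show "prob (\<Inter>j\<in>J. A j) = (\<Prod>j\<in>J. prob (A j))"
  proof (cases "None \<in> J")
    case False
    then have J: "J = Some ` J'" using Jsplit by simp
    then have "J' \<noteq> {}" using Jne by auto
    then show ?thesis unfolding J
      by (simp add: probB prod.reindex image_image)
  next
    case True
    then have J: "J = insert None (Some ` J')" using Jsplit by simp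
    have A0: "A None \<in> sets (vimage_algebra (space M) x0 borel)"
    proof -
      have "A None \<in> {x0 -` A \<inter> space M |A. A \<in> sets borel}" using A True unfolding Efam_def by auto
      then obtain B where "B \<in> sets borel" "A None = x0 -` B \<inter> space M" by blast
      then show ?thesis using in_vimage_algebra[of B borel x0 "space M"] by simp
    qed
    show ?thesis
    proof (cases "J' = {}")
      case True
      then show ?thesis unfolding J by simp
    next
      case False
      have "prob (\<Inter>j\<in>J. A j) = prob (A None \<inter> (\<Inter>j\<in>J'. A (Some j)))"
        unfolding J by (simp add: image_image)
      also have "\<dots> = prob (A None) * prob (\<Inter>j\<in>J'. A (Some j))"
        by (rule indep_setD[OF x0_indep A0 Bmeas[OF False]])
      also have "\<dots> = prob (A None) * (\<Prod>j\<in>J'. prob (A (Some j)))" using probB[OF False] by simp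
      also have "\<dots> = (\<Prod>j\<in>J. prob (A j))" unfolding J
        using J'fin by (simp add: prod.reindex image_image)
      finally show ?thesis .
    qed
  qed
qed

lemma Efam_indep_k:
  fixes om :: "nat \<Rightarrow> 'a \<Rightarrow> 'w" and x0 :: "'a \<Rightarrow> 'e::euclidean_space" and P :: "'w measure"
  assumes ind: "indep_sets (Efam x0 om P) UNIV"
  shows "indep_set (sigma_sets (space M) (\<Union>i\<in>insert None (Some ` {..<k}). Efam x0 om P i))
                   (sigma_sets (space M) (Efam x0 om P (Some k)))"
proof -
  define I where "I b = (if b then insert None (Some ` {..<k}) else {Some k})" for b
  have st: "Int_stable (Efam x0 om P i)" for i
  proof (cases i)
    case None then show ?thesis unfolding Efam_def Int_stable_def
      by clarsimp (subgoal_tac "x0 -` A \<inter> space M \<inter> (x0 -` Aa \<inter> space M) = x0 -` (A \<inter> Aa) \<inter> space M", blast, blast)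
  next
    case (Some j) then show ?thesis unfolding Efam_def Int_stable_def
      by clarsimp (subgoal_tac "om j -` A \<inter> space M \<inter> (om j -` Aa \<inter> space M) = om j -` (A \<inter> Aa) \<inter> space M", blast, blast)
  qed
  have "indep_sets (\<lambda>b. sigma_sets (space M) (\<Union>i\<in>I b. Efam x0 om P i)) UNIV"
  proof (rule indep_sets_collect_sigma)
    show "indep_sets (Efam x0 om P) (\<Union>j\<in>UNIV. I j)" by (rule indep_sets_mono_index[OF _ ind]) simp
    show "disjoint_family_on I UNIV" unfolding disjoint_family_on_def I_def by auto
  qed (rule st)
  then show ?thesis unfolding indep_set_def
    by (rule indep_sets_mono_sets) (auto simp: I_def split: bool.split)
qed

end


locale smd =
  fixes nrm :: "'e::euclidean_space \<Rightarrow> real"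
    and X :: "'e set"
    and P :: "'w measure"
    and G :: "'e \<Rightarrow> 'w \<Rightarrow> real" and dG :: "'e \<Rightarrow> 'w \<Rightarrow> 'e"
    and g :: "'e \<Rightarrow> real" and gradg :: "'e \<Rightarrow> 'e"
    and L \<nu> \<kappa> \<kappa>' :: real
    and xs :: 'e
    and th :: "'e \<Rightarrow> real" and gth :: "'e \<Rightarrow> 'e" and \<Theta> :: real
    and M :: "'s measure" and om :: "nat \<Rightarrow> 's \<Rightarrow> 'w" and x0 :: "'s \<Rightarrow> 'e"
    and R \<beta> :: real and m :: nat
  assumes norm: "is_norm nrm"
    and X: "convex X" "closed X" "interior X \<noteq> {}"
    and P: "prob_space P"
    and g_def: "\<forall>x\<in>X. integrable P (G x) \<and> g x = (\<integral>\<omega>. G x \<omega> \<partial>P)"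
    and g_convex: "convex_on X g"
    and g_diff: "\<forall>x\<in>X. (g has_derivative (\<lambda>h. gradg x \<bullet> h)) (at x within X)"
    and g_lip: "\<forall>x\<in>X. \<forall>x'\<in>X. dual_norm nrm (gradg x - gradg x') \<le> L * nrm (x - x')"
    and xs_min: "xs \<in> X" "\<forall>x\<in>X. g xs \<le> g x"
    and xs_unique: "\<forall>y\<in>X. (\<forall>x\<in>X. g y \<le> g x) \<longrightarrow> y = xs"
    and G_diff: "AE \<omega> in P. \<forall>x\<in>X. ((\<lambda>y. G y \<omega>) has_derivative (\<lambda>h. dG x \<omega> \<bullet> h)) (at x within X)"
    and dG_meas: "(\<lambda>(x, \<omega>). dG x \<omega>) \<in> borel_measurable (borel \<Otimes>\<^sub>M P)"
    and dG_unbiased: "\<forall>x\<in>X. integrable P (dG x) \<and> (\<integral>\<omega>. dG x \<omega> \<partial>P) = gradg x"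
    and params: "1 \<le> \<kappa>" "1 \<le> \<kappa>'" "L \<le> \<nu>"
    and sigma_star_fin: "sigma2 nrm P dG gradg xs < \<infinity>"
    and S1: "\<forall>x\<in>X. sigma2 nrm P dG gradg x
               \<le> ennreal (\<kappa> * \<nu> * (g x - g xs - gradg xs \<bullet> (x - xs))
                         + \<kappa>' * enn2real (sigma2 nrm P dG gradg xs))"
    and th_deriv: "\<forall>x. (th has_derivative (\<lambda>h. gth x \<bullet> h)) (at x)"
    and th_C1: "continuous_on UNIV gth"
    and th_convex: "convex_on UNIV th"
    and th_strong: "\<forall>x x'. (gth x - gth x') \<bullet> (x - x') \<ge> (nrm (x - x'))\<^sup>2"
    and th_min: "th 0 = 0" "\<forall>x. th x \<ge> 0"
    and th_bound: "\<forall>x. th x \<le> \<Theta> * (nrm x)\<^sup>2"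
    and M: "prob_space M"
    and om_meas: "\<forall>i. om i \<in> measurable M P"
    and om_distr: "\<forall>i. distr M P (om i) = P"
    and om_indep: "prob_space.indep_vars M (\<lambda>_. P) om UNIV"
    and x0_meas: "x0 \<in> borel_measurable M"
    and x0_indep: "indep_rvs M borel x0 (Pi\<^sub>M UNIV (\<lambda>_::nat. P)) (\<lambda>s i. om i s)"
    and x0_in: "\<forall>s\<in>space M. x0 s \<in> X"
    and x0_R: "(\<integral>\<^sup>+ s. ennreal ((nrm (x0 s - xs))\<^sup>2) \<partial>M) \<le> ennreal (R\<^sup>2)"
    and beta: "\<beta> > 0" "\<beta> \<ge> 2 * \<kappa> * \<nu>"
    and m: "m \<ge> 1"
begin

sublocale PS: proxsetup nrm th gth X \<beta>
  using norm th_deriv th_C1 th_strong th_min X beta interior_subset[of X]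
  by unfold_locales auto

sublocale Mp: prob_space M by (rule M)
sublocale Pp: prob_space P by (rule P)

definition xk :: "nat \<Rightarrow> 's \<Rightarrow> 'e" where
  "xk k s = smd_iter th gth X \<beta> dG (\<lambda>j. om j s) (x0 s) k"

lemma xk_0: "xk 0 s = x0 s" unfolding xk_def by simp

lemma xk_Suc: "xk (Suc k) s = prox th gth X \<beta> (dG (xk k s) (om k s)) (xk k s) (x0 s)"
  unfolding xk_def by simp

lemma xk_in: "s \<in> space M \<Longrightarrow> xk k s \<in> X"
  by (cases k) (auto simp: xk_0 xk_Suc x0_in PS.prox_in)

lemma xk_meas_gen:
  assumes "x0 \<in> borel_measurable N" "\<forall>j<k. om j \<in> measurable N P"
  shows "xk k \<in> borel_measurable N"
  using assms(2)
proof (induction k)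
  case 0 then show ?case using assms(1) by (simp add: xk_0[abs_def])
next
  case (Suc k)
  then have ih: "xk k \<in> borel_measurable N" and omk: "om k \<in> measurable N P" by auto
  have "(\<lambda>s. (xk k s, om k s)) \<in> measurable N (borel \<Otimes>\<^sub>M P)" using ih omk by (rule measurable_Pair)
  from measurable_compose[OF this dG_meas]
  have dm: "(\<lambda>s. dG (xk k s) (om k s)) \<in> borel_measurable N" by simp
  show ?case unfolding xk_Suc[abs_def] by (rule PS.prox_meas[OF dm ih assms(1)])
qed

lemma xk_meas: "xk k \<in> borel_measurable M"
  by (rule xk_meas_gen[OF x0_meas]) (use om_meas in auto)

lemma xk_indep: "Mp.indep2 borel (xk k) P (om k)"
proof -
  have ind: "Mp.indep_sets (Mp.Efam x0 om P) UNIV"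
    by (rule Mp.Efam_indep[OF om_meas om_indep x0_meas]) (use x0_indep in \<open>simp add: indep_rvs_def\<close>)
  define Gs where "Gs = (\<Union>i\<in>insert None (Some ` {..<k}). Mp.Efam x0 om P i)"
  have ik: "Mp.indep_set (sigma_sets (space M) Gs) (sigma_sets (space M) (Mp.Efam x0 om P (Some k)))"
    unfolding Gs_def by (rule Mp.Efam_indep_k[OF ind])
  define N where "N = sigma (space M) Gs"
  have Gsub: "Gs \<subseteq> Pow (space M)" unfolding Gs_def Mp.Efam_def by (auto split: option.split)
  have spN: "space N = space M" unfolding N_def using Gsub by (simp add: space_measure_of)
  have setsN: "sets N = sigma_sets (space M) Gs" unfolding N_def using Gsub by (simp add: sets_measure_of)
  have x0N: "x0 \<in> borel_measurable N"
  proof (rule measurableI)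
    fix A :: "'e set" assume "A \<in> sets borel"
    then have "x0 -` A \<inter> space M \<in> Gs" unfolding Gs_def Mp.Efam_def by force
    then show "x0 -` A \<inter> space N \<in> sets N" unfolding spN setsN by auto
  qed simp
  have omN: "om j \<in> measurable N P" if "j < k" for j
  proof (rule measurableI)
    fix x assume "x \<in> space N" then show "om j x \<in> space P"
      using measurable_space[OF om_meas[rule_format, of j]] spN by auto
  next
    fix A assume "A \<in> sets P"
    then have "om j -` A \<inter> space M \<in> Gs" unfolding Gs_def Mp.Efam_def using that by force
    then show "om j -` A \<inter> space N \<in> sets N" unfolding spN setsN by auto
  qed
  have xkN: "xk k \<in> borel_measurable N" by (rule xk_meas_gen[OF x0N]) (use omN in auto)
  show ?thesis unfolding Mp.indep2_def
  proof (intro conjI ballI)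
    show "xk k \<in> borel_measurable M" by (rule xk_meas)
    show "om k \<in> measurable M P" using om_meas by auto
    fix a :: "'e set" and b :: "'w set" assume a: "a \<in> sets borel" and b: "b \<in> sets P"
    have "xk k -` a \<inter> space N \<in> sets N" using measurable_sets[OF xkN a] .
    then have A: "xk k -` a \<inter> space M \<in> sigma_sets (space M) Gs" using spN setsN by simp
    have B: "om k -` b \<inter> space M \<in> sigma_sets (space M) (Mp.Efam x0 om P (Some k))"
      using b unfolding Mp.Efam_def by (auto intro!: sigma_sets.Basic)
    have "Mp.prob ((xk k -` a \<inter> space M) \<inter> (om k -` b \<inter> space M)) = Mp.prob (xk k -` a \<inter> space M) * Mp.prob (om k -` b \<inter> space M)"
      by (rule Mp.indep_setD[OF ik A B])
    moreover have "(xk k -` a \<inter> space M) \<inter> (om k -` b \<inter> space M) = xk k -` a \<inter> om k -` b \<inter> space M" by auto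
    ultimately show "Mp.prob (xk k -` a \<inter> om k -` b \<inter> space M) = Mp.prob (xk k -` a \<inter> space M) * Mp.prob (om k -` b \<inter> space M)"
      by simp
  qed
qed

end


context smd
begin

lemma gth0: "gth 0 = 0"
proof -
  have "gth 0 \<bullet> (- gth 0 - 0) \<ge> 0"
    by (rule opt_cond[of UNIV 0 "- gth 0" th gth]) (use th_deriv th_min in \<open>auto intro: has_derivative_at_withinI\<close>)
  then show ?thesis by (metis inner_ge_zero inner_eq_zero_iff order_antisym_conv diff_zero inner_minus_right neg_0_le_iff_le)
qed

lemma Theta_nonneg: "\<Theta> \<ge> 0"
proof -
  obtain b :: 'e where b: "b \<in> Basis" using nonempty_Basis by blast
  then have "b \<noteq> 0" by auto
  then have "nrm b \<noteq> 0" using norm unfolding is_norm_def by auto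
  then have p: "(nrm b)\<^sup>2 > 0" by simp
  have "0 \<le> \<Theta> * (nrm b)\<^sup>2" using th_min th_bound by (meson order_trans)
  then show ?thesis using p by (simp add: zero_le_mult_iff)
qed

lemma L_le: "L \<le> \<beta> / 2"
proof (cases "\<nu> \<ge> 0")
  case True
  then have "\<nu> \<le> \<kappa> * \<nu>" using params(1) by (simp add: mult_le_cancel_right1)
  then show ?thesis using beta params by linarith
next
  case False then show ?thesis using beta params by linarith
qed

lemma step_det:
  assumes x: "x \<in> X" and z_def: "z = prox th gth X \<beta> (dG x \<omega>) x a"
  shows "g z - g xs + \<beta> * bregman th gth a z xs
     \<le> \<beta> * bregman th gth a x xs - (dG x \<omega> - gradg x) \<bullet> (x - xs) + (dual_norm nrm (dG x \<omega> - gradg x))\<^sup>2 / \<beta>"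
proof -
  define \<zeta> where "\<zeta> = dG x \<omega> - gradg x"
  define n where "n = nrm (z - x)"
  define c where "c = \<beta> - L"
  have c: "c \<ge> \<beta> / 2" "c > 0" unfolding c_def using L_le beta by auto
  have zX: "z \<in> X" unfolding z_def by (rule PS.prox_in)
  have tp: "dG x \<omega> \<bullet> (z - xs) \<le> \<beta> * (bregman th gth a x xs - bregman th gth a z xs - bregman th gth a x z)"
    by (rule PS.three_point[OF xs_min(1)]) (simp add: z_def)
  have bl: "bregman th gth a x z \<ge> 1/2 * n\<^sup>2" unfolding n_def by (rule PS.bregman_lower)
  have desc: "g z \<le> g x + gradg x \<bullet> (z - x) + L / 2 * n\<^sup>2" unfolding n_def
    by (rule descent_lemma[OF norm X(1) x zX g_diff g_lip])
  have gi: "g xs \<ge> g x + gradg x \<bullet> (xs - x)" by (rule grad_ineq[OF X(1) x xs_min(1) g_diff g_convex])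
  have nsym: "nrm (x - z) = n" unfolding n_def by (rule nrm_diff_sym[OF norm])
  have di: "\<zeta> \<bullet> (x - z) \<le> dual_norm nrm \<zeta> * n" using dual_ineq[OF norm, of \<zeta> "x - z"] nsym by simp
  have yo: "dual_norm nrm \<zeta> * n \<le> (dual_norm nrm \<zeta>)\<^sup>2 / (2 * c) + c * n\<^sup>2 / 2" by (rule young[OF c(2)])
  have q: "(dual_norm nrm \<zeta>)\<^sup>2 / (2 * c) \<le> (dual_norm nrm \<zeta>)\<^sup>2 / \<beta>"
    using c beta by (intro divide_left_mono) auto
  have gz: "gradg x = dG x \<omega> - \<zeta>" unfolding \<zeta>_def by simp
  have e1: "gradg x \<bullet> (z - x) + gradg x \<bullet> (x - xs) = dG x \<omega> \<bullet> (z - xs) - \<zeta> \<bullet> (x - xs) + \<zeta> \<bullet> (x - z)"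
    unfolding gz by (simp add: inner_diff_left inner_diff_right algebra_simps)
  have bx: "\<beta> * (bregman th gth a x z) \<ge> \<beta> * (1/2 * n\<^sup>2)" using bl beta by (intro mult_left_mono) auto
  have H: "g z - g xs \<le> \<beta> * (bregman th gth a x xs - bregman th gth a z xs) - \<beta> / 2 * n\<^sup>2 - \<zeta> \<bullet> (x - xs)
       + (dual_norm nrm \<zeta>)\<^sup>2 / \<beta> + c * n\<^sup>2 / 2 + L / 2 * n\<^sup>2"
    using desc gi e1 tp bx di yo q by (simp add: algebra_simps)
  have E: "c * n\<^sup>2 / 2 + L / 2 * n\<^sup>2 = \<beta> / 2 * n\<^sup>2" unfolding c_def by (simp add: field_simps)
  show ?thesis using H E unfolding \<zeta>_def by (simp add: algebra_simps)
qed

end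


context smd
begin

definition gm :: "'e \<Rightarrow> 'e" where "gm x = (\<integral>\<omega>. dG x \<omega> \<partial>P)"

lemma gm_meas: "gm \<in> borel_measurable borel"
proof -
  have "(\<lambda>(x, \<omega>). dG x \<omega>) \<in> borel_measurable (borel \<Otimes>\<^sub>M P)" by (rule dG_meas)
  then have "case_prod dG \<in> borel_measurable (borel \<Otimes>\<^sub>M P)" by (simp add: case_prod_beta')
  then show ?thesis unfolding gm_def[abs_def] by (rule Pp.borel_measurable_lebesgue_integral)
qed

lemma gm_eq: "x \<in> X \<Longrightarrow> gm x = gradg x"
  unfolding gm_def using dG_unbiased by auto

lemma g_cont: "continuous_on X g"
  by (rule has_derivative_continuous_on) (use g_diff in auto)

lemma g_comp_meas:
  assumes f: "f \<in> borel_measurable N" and fX: "\<forall>s\<in>space N. f s \<in> X"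
  shows "(\<lambda>s. g (f s)) \<in> borel_measurable N"
proof -
  have "f \<in> measurable N (restrict_space borel X)"
    by (rule measurable_restrict_space2) (use f fX in auto)
  moreover have "g \<in> borel_measurable (restrict_space borel X)"
    by (rule borel_measurable_continuous_on_restrict[OF g_cont])
  ultimately show ?thesis by (rule measurable_compose)
qed

lemma dGk_meas: "(\<lambda>s. dG (xk k s) (om k s)) \<in> borel_measurable M"
proof -
  have "(\<lambda>s. (xk k s, om k s)) \<in> measurable M (borel \<Otimes>\<^sub>M P)"
    using xk_meas om_meas by (intro measurable_Pair) auto
  from measurable_compose[OF this dG_meas] show ?thesis by simp
qed

definition "Zk k s = dG (xk k s) (om k s) - gradg (xk k s)"
definition "Sk k s = (dual_norm nrm (Zk k s))\<^sup>2"
definition "Ik k s = Zk k s \<bullet> (xk k s - xs)"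
definition "Vk k s = bregman th gth (x0 s) (xk k s) xs"
definition "Gk k s = g (xk k s) - g xs"
definition "Dk k s = g (xk k s) - g xs - gradg xs \<bullet> (xk k s - xs)"
definition "sig = enn2real (sigma2 nrm P dG gradg xs)"
definition "nup = max \<nu> 0"

lemma Zk_alt: "s \<in> space M \<Longrightarrow> Zk k s = dG (xk k s) (om k s) - gm (xk k s)"
  unfolding Zk_def using gm_eq xk_in by simp

lemma Zk_meas: "Zk k \<in> borel_measurable M"
proof -
  have "(\<lambda>s. dG (xk k s) (om k s) - gm (xk k s)) \<in> borel_measurable M"
    using dGk_meas measurable_compose[OF xk_meas gm_meas] by (rule borel_measurable_diff)
  then show ?thesis by (rule measurable_cong[THEN iffD1, rotated]) (simp add: Zk_alt)
qed

lemma Sk_meas: "Sk k \<in> borel_measurable M"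
  unfolding Sk_def[abs_def]
  by (intro borel_measurable_power borel_measurable_continuous_on[OF dual_cont[OF norm] Zk_meas])

lemma Ik_meas: "Ik k \<in> borel_measurable M"
  unfolding Ik_def[abs_def] using Zk_meas xk_meas by (intro borel_measurable_inner borel_measurable_diff) auto

lemma th_meas: "th \<in> borel_measurable borel"
  by (rule borel_measurable_continuous_onI[OF PS.th_cont])

lemma gth_meas: "gth \<in> borel_measurable borel"
  by (rule borel_measurable_continuous_onI[OF th_C1])

lemma Vk_meas: "Vk k \<in> borel_measurable M"
  unfolding Vk_def[abs_def] bregman_def
  using xk_meas x0_meas th_meas gth_meas
  by (intro borel_measurable_diff borel_measurable_inner measurable_compose[OF _ th_meas] measurable_compose[OF _ gth_meas]) auto

lemma Gk_meas: "Gk k \<in> borel_measurable M"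
  unfolding Gk_def[abs_def] using g_comp_meas[OF xk_meas] xk_in by (intro borel_measurable_diff) auto

lemma Dk_meas: "Dk k \<in> borel_measurable M"
  unfolding Dk_def[abs_def] using g_comp_meas[OF xk_meas] xk_in xk_meas
  by (intro borel_measurable_diff borel_measurable_inner) auto

lemma Gk_nonneg: "s \<in> space M \<Longrightarrow> Gk k s \<ge> 0"
  unfolding Gk_def using xs_min xk_in by auto

lemma Dk_nonneg: assumes "s \<in> space M" shows "Dk k s \<ge> 0"
proof -
  have "g xs + gradg xs \<bullet> (xk k s - xs) \<le> g (xk k s)"
    using grad_ineq[OF X(1) xs_min(1) xk_in[OF assms] g_diff g_convex] .
  then show ?thesis unfolding Dk_def by linarith
qed

lemma Dk_le_Gk: assumes "s \<in> space M" shows "Dk k s \<le> Gk k s"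
proof -
  have "gradg xs \<bullet> (xk k s - xs) \<ge> 0" using opt_cond[OF X(1) xs_min(1) xk_in[OF assms] g_diff xs_min(2)] .
  then show ?thesis unfolding Dk_def Gk_def by linarith
qed

lemma Vk_lower: "Vk k s \<ge> 1/2 * (nrm (xk k s - xs))\<^sup>2"
  unfolding Vk_def using PS.bregman_lower[of xs "xk k s" "x0 s"] nrm_diff_sym[OF norm, of xs "xk k s"] by simp

lemma Vk_nonneg: "Vk k s \<ge> 0"
proof -
  have "0 \<le> 1/2 * (nrm (xk k s - xs))\<^sup>2" by simp
  then show ?thesis using Vk_lower[of k s] by linarith
qed

lemma Sk_nonneg: "Sk k s \<ge> 0" unfolding Sk_def by simp

lemma step_k: "s \<in> space M \<Longrightarrow> Gk (Suc k) s + \<beta> * Vk (Suc k) s \<le> \<beta> * Vk k s - Ik k s + Sk k s / \<beta>"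
  unfolding Gk_def Vk_def Ik_def Sk_def Zk_def xk_Suc
  using step_det[OF xk_in refl] by simp

end


context smd
begin

lemma sig_nonneg: "sig \<ge> 0" unfolding sig_def by simp
lemma nup_nonneg: "nup \<ge> 0" unfolding nup_def by simp

lemma pair_meas1: "(\<lambda>p. dG (fst p) (snd p) - gm (fst p)) \<in> borel_measurable (borel \<Otimes>\<^sub>M P)"
proof -
  have "(\<lambda>p. dG (fst p) (snd p)) \<in> borel_measurable (borel \<Otimes>\<^sub>M P)"
    using dG_meas by (simp add: case_prod_beta')
  moreover have "(\<lambda>p. gm (fst p)) \<in> borel_measurable (borel \<Otimes>\<^sub>M P)"
    by (rule measurable_compose[OF measurable_fst gm_meas])
  ultimately show ?thesis by (rule borel_measurable_diff)
qed

lemma E1: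
  assumes Dint: "integrable M (Dk k)"
  shows "integrable M (Sk k)" "(\<integral>s. Sk k s \<partial>M) \<le> \<kappa> * nup * (\<integral>s. Dk k s \<partial>M) + \<kappa>' * sig"
proof -
  define bnd where "bnd s = \<kappa> * nup * Dk k s + \<kappa>' * sig" for s
  have bint: "integrable M bnd" unfolding bnd_def[abs_def] using Dint by auto
  have bnn: "s \<in> space M \<Longrightarrow> bnd s \<ge> 0" for s
    unfolding bnd_def using params Dk_nonneg[of s k] nup_nonneg sig_nonneg by auto
  define f1 where "f1 p = ennreal ((dual_norm nrm (dG (fst p) (snd p) - gm (fst p)))\<^sup>2)" for p
  have h2: "(\<lambda>p. (dual_norm nrm (dG (fst p) (snd p) - gm (fst p)))\<^sup>2) \<in> borel_measurable (borel \<Otimes>\<^sub>M P)"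
    by (intro borel_measurable_power borel_measurable_continuous_on[OF dual_cont[OF norm] pair_meas1])
  have f1m: "f1 \<in> borel_measurable (borel \<Otimes>\<^sub>M P)"
    unfolding f1_def[abs_def] by (rule measurable_compose[OF h2 measurable_ennreal])
  have "(\<integral>\<^sup>+ s. ennreal (Sk k s) \<partial>M) = (\<integral>\<^sup>+ s. f1 (xk k s, om k s) \<partial>M)"
    by (rule nn_integral_cong) (simp add: f1_def Sk_def Zk_alt)
  also have "\<dots> = (\<integral>\<^sup>+ s. (\<integral>\<^sup>+ \<omega>. f1 (xk k s, \<omega>) \<partial>P) \<partial>M)"
    by (rule Mp.indep_transfer_nn[OF xk_indep om_distr[rule_format] P f1m])
  also have "\<dots> = (\<integral>\<^sup>+ s. sigma2 nrm P dG gradg (xk k s) \<partial>M)"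
    by (rule nn_integral_cong) (simp add: f1_def sigma2_def gm_eq xk_in)
  also have "\<dots> \<le> (\<integral>\<^sup>+ s. ennreal (bnd s) \<partial>M)"
  proof (rule nn_integral_mono)
    fix s assume s: "s \<in> space M"
    have "sigma2 nrm P dG gradg (xk k s) \<le> ennreal (\<kappa> * \<nu> * Dk k s + \<kappa>' * sig)"
      using S1 xk_in[OF s] unfolding Dk_def sig_def by auto
    also have "\<dots> \<le> ennreal (bnd s)"
    proof (rule ennreal_leI)
      have "\<kappa> * \<nu> * Dk k s \<le> \<kappa> * nup * Dk k s"
        using params Dk_nonneg[OF s, of k] by (intro mult_right_mono mult_left_mono) (auto simp: nup_def)
      then show "\<kappa> * \<nu> * Dk k s + \<kappa>' * sig \<le> bnd s" unfolding bnd_def by simp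
    qed
    finally show "sigma2 nrm P dG gradg (xk k s) \<le> ennreal (bnd s)" .
  qed
  also have "\<dots> = ennreal (\<integral>s. bnd s \<partial>M)"
    by (rule nn_integral_eq_integral[OF bint]) (use bnn in auto)
  finally have le: "(\<integral>\<^sup>+ s. ennreal (Sk k s) \<partial>M) \<le> ennreal (\<integral>s. bnd s \<partial>M)" .
  show Sint: "integrable M (Sk k)"
    by (rule integrableI_nonneg[OF Sk_meas]) (use le Sk_nonneg in \<open>auto simp: top_unique less_top[symmetric] intro: le_less_trans\<close>)
  have "ennreal (\<integral>s. Sk k s \<partial>M) = (\<integral>\<^sup>+ s. ennreal (Sk k s) \<partial>M)"
    by (rule nn_integral_eq_integral[symmetric, OF Sint]) (use Sk_nonneg in auto)
  have bge: "(\<integral>s. bnd s \<partial>M) \<ge> 0" by (rule integral_nonneg_AE) (use bnn in auto)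
  have "ennreal (\<integral>s. Sk k s \<partial>M) \<le> ennreal (\<integral>s. bnd s \<partial>M)"
    using le \<open>ennreal (\<integral>s. Sk k s \<partial>M) = _\<close> by simp
  then have "(\<integral>s. Sk k s \<partial>M) \<le> (\<integral>s. bnd s \<partial>M)" using ennreal_le_iff[OF bge] by simp
  also have "(\<integral>s. bnd s \<partial>M) = \<kappa> * nup * (\<integral>s. Dk k s \<partial>M) + \<kappa>' * sig"
    unfolding bnd_def using Dint Mp.prob_space by simp
  finally show "(\<integral>s. Sk k s \<partial>M) \<le> \<kappa> * nup * (\<integral>s. Dk k s \<partial>M) + \<kappa>' * sig" .
qed

lemma Ik_bound: "\<bar>Ik k s\<bar> \<le> 1/2 * Sk k s + Vk k s"
proof -
  define y where "y = xk k s - xs"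
  have a: "Zk k s \<bullet> y \<le> dual_norm nrm (Zk k s) * nrm y" by (rule dual_ineq[OF norm])
  have b: "- (Zk k s \<bullet> y) \<le> dual_norm nrm (Zk k s) * nrm y"
    using dual_ineq[OF norm, of "Zk k s" "- y"] nrm_minus[OF norm, of y] by simp
  have c: "dual_norm nrm (Zk k s) * nrm y \<le> (dual_norm nrm (Zk k s))\<^sup>2 / (2 * 1) + 1 * (nrm y)\<^sup>2 / 2"
    by (rule young) simp
  have d: "1/2 * (nrm y)\<^sup>2 \<le> Vk k s" using Vk_lower[of k s] unfolding y_def .
  show ?thesis using a b c d unfolding Ik_def Sk_def y_def[symmetric] by (simp add: abs_le_iff)
qed

lemma Ik_int:
  assumes "integrable M (Sk k)" "integrable M (Vk k)"
  shows "integrable M (Ik k)"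
proof -
  have i: "integrable M (\<lambda>s. 1/2 * Sk k s + Vk k s)" using assms by auto
  have ae: "AE s in M. norm (Ik k s) \<le> norm (1/2 * Sk k s + Vk k s)"
    using Sk_nonneg Vk_nonneg by (auto intro!: AE_I2 order_trans[OF Ik_bound] abs_ge_self)
  show ?thesis using Bochner_Integration.integrable_bound[OF i Ik_meas ae] .
qed

lemma E2:
  assumes Iint: "integrable M (Ik k)"
  shows "(\<integral>s. Ik k s \<partial>M) = 0"
proof -
  define f2 where "f2 p = (dG (fst p) (snd p) - gm (fst p)) \<bullet> (fst p - xs)" for p
  have fm: "(\<lambda>p. fst p - xs) \<in> borel_measurable (borel \<Otimes>\<^sub>M P)" by measurable
  have f2m: "f2 \<in> borel_measurable (borel \<Otimes>\<^sub>M P)"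
    unfolding f2_def[abs_def] by (rule borel_measurable_inner[OF pair_meas1 fm])
  have eq: "s \<in> space M \<Longrightarrow> Ik k s = f2 (xk k s, om k s)" for s
    by (simp add: f2_def Ik_def Zk_alt)
  have "integrable M (Ik k) = integrable M (\<lambda>s. f2 (xk k s, om k s))"
    by (rule Bochner_Integration.integrable_cong) (simp_all add: eq)
  with Iint have int2: "integrable M (\<lambda>s. f2 (xk k s, om k s))" by simp
  have inner0: "(\<integral>\<omega>. f2 (x, \<omega>) \<partial>P) = 0" if x: "x \<in> X" for x
  proof -
    have di: "integrable P (dG x)" using dG_unbiased x by auto
    have "(\<integral>\<omega>. f2 (x, \<omega>) \<partial>P) = (\<integral>\<omega>. dG x \<omega> \<bullet> (x - xs) - gm x \<bullet> (x - xs) \<partial>P)"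
      unfolding f2_def by (simp add: inner_diff_left)
    also have "\<dots> = (\<integral>\<omega>. dG x \<omega> \<bullet> (x - xs) \<partial>P) - (\<integral>\<omega>. gm x \<bullet> (x - xs) \<partial>P)"
      using di by (intro Bochner_Integration.integral_diff) auto
    also have "\<dots> = 0" using di Pp.prob_space unfolding gm_def by simp
    finally show ?thesis .
  qed
  have "(\<integral>s. Ik k s \<partial>M) = (\<integral>s. f2 (xk k s, om k s) \<partial>M)" by (rule Bochner_Integration.integral_cong) (simp_all add: eq)
  also have "\<dots> = (\<integral>s. (\<integral>\<omega>. f2 (xk k s, \<omega>) \<partial>P) \<partial>M)"
    by (rule Mp.indep_transfer_int[OF xk_indep om_distr[rule_format] P f2m int2])
  also have "\<dots> = (\<integral>s. 0 \<partial>M)" by (rule Bochner_Integration.integral_cong) (simp_all add: inner0 xk_in)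
  finally show ?thesis by simp
qed

end


context smd
begin

lemma int_sandwich:
  fixes f h :: "'s \<Rightarrow> real"
  assumes "f \<in> borel_measurable M" "integrable M h" "\<And>s. s \<in> space M \<Longrightarrow> 0 \<le> f s \<and> f s \<le> h s"
  shows "integrable M f"
proof -
  have ae: "AE s in M. norm (f s) \<le> norm (h s)"
  proof (rule AE_I2)
    fix s assume "s \<in> space M"
    then have "0 \<le> f s" "f s \<le> h s" using assms(3) by auto
    then show "norm (f s) \<le> norm (h s)" by simp
  qed
  show ?thesis using Bochner_Integration.integrable_bound[OF assms(2) assms(1) ae] .
qed

definition "n0 s = (nrm (x0 s - xs))\<^sup>2"

lemma n0_meas: "n0 \<in> borel_measurable M"
  unfolding n0_def[abs_def] using x0_meas
  by (intro borel_measurable_power borel_measurable_continuous_on[OF nrm_cont[OF norm]] borel_measurable_diff) auto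

lemma n0_int: "integrable M n0" and n0_le: "(\<integral>s. n0 s \<partial>M) \<le> R\<^sup>2"
proof -
  have le: "(\<integral>\<^sup>+ s. ennreal (n0 s) \<partial>M) \<le> ennreal (R\<^sup>2)" using x0_R unfolding n0_def .
  show ni: "integrable M n0"
    by (rule integrableI_nonneg[OF n0_meas]) (use le in \<open>auto simp: n0_def intro: le_less_trans\<close>)
  have "ennreal (\<integral>s. n0 s \<partial>M) = (\<integral>\<^sup>+ s. ennreal (n0 s) \<partial>M)"
    by (rule nn_integral_eq_integral[symmetric, OF ni]) (auto simp: n0_def)
  with le have "ennreal (\<integral>s. n0 s \<partial>M) \<le> ennreal (R\<^sup>2)" by simp
  then show "(\<integral>s. n0 s \<partial>M) \<le> R\<^sup>2" using ennreal_le_iff[OF zero_le_power2[of R]] by blast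
qed

lemma V0_eq: "Vk 0 s = th (xs - x0 s)"
  unfolding Vk_def bregman_def xk_0 by (simp add: gth0 th_min)

lemma V0_le: "Vk 0 s \<le> \<Theta> * n0 s"
proof -
  have "th (xs - x0 s) \<le> \<Theta> * (nrm (xs - x0 s))\<^sup>2" using th_bound by blast
  then show ?thesis unfolding V0_eq n0_def using nrm_diff_sym[OF norm, of xs "x0 s"] by simp
qed

lemma D0_le: assumes s: "s \<in> space M" shows "Dk 0 s \<le> L / 2 * n0 s"
proof -
  have h: "g (x0 s) \<le> g xs + gradg xs \<bullet> (x0 s - xs) + L / 2 * (nrm (x0 s - xs))\<^sup>2"
    using descent_lemma[OF norm X(1) xs_min(1) x0_in[rule_format, OF s] g_diff g_lip] .
  show ?thesis unfolding Dk_def n0_def xk_0 using h by linarith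
qed

lemma L_nonneg_or: "s \<in> space M \<Longrightarrow> Dk 0 s \<le> \<bar>L\<bar> / 2 * n0 s"
proof -
  assume s: "s \<in> space M"
  have "L / 2 * n0 s \<le> \<bar>L\<bar> / 2 * n0 s" by (intro mult_right_mono) (auto simp: n0_def)
  then show ?thesis using D0_le[OF s] by linarith
qed

lemma base_int: "integrable M (Vk 0)" "integrable M (Dk 0)"
proof -
  show "integrable M (Vk 0)"
    by (rule int_sandwich[OF Vk_meas _ , of "\<lambda>s. \<Theta> * n0 s"]) (use n0_int V0_le Vk_nonneg in auto)
  show "integrable M (Dk 0)"
    by (rule int_sandwich[OF Dk_meas _ , of "\<lambda>s. \<bar>L\<bar> / 2 * n0 s"]) (use n0_int L_nonneg_or Dk_nonneg in auto)
qed

lemma step_int: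
  assumes Vi: "integrable M (Vk k)" and Di: "integrable M (Dk k)"
  shows "integrable M (Vk (Suc k))" "integrable M (Dk (Suc k))" "integrable M (Gk (Suc k))"
    "(\<integral>s. Gk (Suc k) s \<partial>M) + \<beta> * (\<integral>s. Vk (Suc k) s \<partial>M)
       \<le> \<beta> * (\<integral>s. Vk k s \<partial>M) + (\<kappa> * nup / \<beta>) * (\<integral>s. Dk k s \<partial>M) + \<kappa>' * sig / \<beta>"
proof -
  have Si: "integrable M (Sk k)" and Sle: "(\<integral>s. Sk k s \<partial>M) \<le> \<kappa> * nup * (\<integral>s. Dk k s \<partial>M) + \<kappa>' * sig"
    using E1[OF Di] by auto
  have Ii: "integrable M (Ik k)" by (rule Ik_int[OF Si Vi])
  have I0: "(\<integral>s. Ik k s \<partial>M) = 0" by (rule E2[OF Ii])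
  define r where "r s = \<beta> * Vk k s - Ik k s + Sk k s / \<beta>" for s
  define l where "l s = Gk (Suc k) s + \<beta> * Vk (Suc k) s" for s
  have ri: "integrable M r" unfolding r_def[abs_def] using Vi Ii Si by auto
  have lm: "l \<in> borel_measurable M" unfolding l_def[abs_def] using Gk_meas Vk_meas by auto
  have lnn: "s \<in> space M \<Longrightarrow> 0 \<le> Gk (Suc k) s \<and> 0 \<le> Vk (Suc k) s" for s
    using Gk_nonneg Vk_nonneg by auto
  have lr: "s \<in> space M \<Longrightarrow> l s \<le> r s" for s unfolding l_def r_def using step_k by auto
  have li: "integrable M l"
    by (rule int_sandwich[OF lm ri]) (use lnn lr beta in \<open>auto simp: l_def\<close>)
  show Gi: "integrable M (Gk (Suc k))"
    by (rule int_sandwich[OF Gk_meas li]) (use lnn beta in \<open>auto simp: l_def\<close>)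
  show Vi': "integrable M (Vk (Suc k))"
  proof (rule int_sandwich[OF Vk_meas, of "\<lambda>s. l s / \<beta>"])
    show "integrable M (\<lambda>s. l s / \<beta>)" using li by auto
    fix s assume "s \<in> space M"
    then show "0 \<le> Vk (Suc k) s \<and> Vk (Suc k) s \<le> l s / \<beta>"
      using lnn[of s] beta by (auto simp: l_def field_simps)
  qed
  show "integrable M (Dk (Suc k))"
    by (rule int_sandwich[OF Dk_meas Gi]) (use Dk_nonneg Dk_le_Gk in auto)
  have "(\<integral>s. l s \<partial>M) \<le> (\<integral>s. r s \<partial>M)" by (rule integral_mono[OF li ri]) (use lr in auto)
  moreover have "(\<integral>s. l s \<partial>M) = (\<integral>s. Gk (Suc k) s \<partial>M) + \<beta> * (\<integral>s. Vk (Suc k) s \<partial>M)"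
    unfolding l_def[abs_def] using Gi Vi' by simp
  moreover have "(\<integral>s. r s \<partial>M) = \<beta> * (\<integral>s. Vk k s \<partial>M) - (\<integral>s. Ik k s \<partial>M) + (\<integral>s. Sk k s \<partial>M) / \<beta>"
    unfolding r_def[abs_def] using Vi Ii Si by simp
  moreover have "(\<integral>s. Sk k s \<partial>M) / \<beta> \<le> (\<kappa> * nup / \<beta>) * (\<integral>s. Dk k s \<partial>M) + \<kappa>' * sig / \<beta>"
    using Sle beta by (simp add: divide_right_mono add_divide_distrib[symmetric] field_simps)
  ultimately show "(\<integral>s. Gk (Suc k) s \<partial>M) + \<beta> * (\<integral>s. Vk (Suc k) s \<partial>M)
       \<le> \<beta> * (\<integral>s. Vk k s \<partial>M) + (\<kappa> * nup / \<beta>) * (\<integral>s. Dk k s \<partial>M) + \<kappa>' * sig / \<beta>"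
    using I0 by linarith
qed

lemma all_int: "integrable M (Vk k) \<and> integrable M (Dk k)"
  by (induction k) (use base_int step_int in auto)

lemma G_int: "k \<ge> 1 \<Longrightarrow> integrable M (Gk k)"
  using step_int(3)[of "k - 1"] all_int[of "k - 1"] by (cases k) auto

end


context smd
begin

definition "aa k = (\<integral>s. Gk k s \<partial>M)"
definition "dd k = (\<integral>s. Dk k s \<partial>M)"
definition "vv k = (\<integral>s. Vk k s \<partial>M)"
definition "qq = \<kappa> * nup / \<beta>"
definition "cc = \<kappa>' * sig / \<beta>"

lemma rec_ineq: "aa (Suc k) + \<beta> * vv (Suc k) \<le> \<beta> * vv k + qq * dd k + cc"
  unfolding aa_def vv_def dd_def qq_def cc_def using step_int(4) all_int by blast

lemma vv_nonneg: "vv k \<ge> 0" unfolding vv_def by (rule integral_nonneg_AE) (use Vk_nonneg in auto)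
lemma aa_nonneg: "aa k \<ge> 0" unfolding aa_def by (rule integral_nonneg_AE) (use Gk_nonneg in auto)
lemma dd_nonneg: "dd k \<ge> 0" unfolding dd_def by (rule integral_nonneg_AE) (use Dk_nonneg in auto)

lemma dd_le: "k \<ge> 1 \<Longrightarrow> dd k \<le> aa k"
  unfolding dd_def aa_def using all_int G_int Dk_le_Gk by (intro integral_mono) auto

lemma qq_bounds: "0 \<le> qq" "qq \<le> 1/2"
proof -
  show "0 \<le> qq" unfolding qq_def using params beta nup_nonneg by auto
  show "qq \<le> 1/2"
  proof (cases "\<nu> \<ge> 0")
    case True
    then have "\<kappa> * nup \<le> \<beta> / 2" using beta unfolding nup_def by auto
    then show ?thesis unfolding qq_def using beta by (simp add: field_simps)
  next
    case False then show ?thesis unfolding qq_def nup_def by simp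
  qed
qed

lemma sum_claim: "(\<Sum>i\<in>{1..n}. aa i) + \<beta> * vv n \<le> \<beta> * vv 0 + qq * dd 0 + qq * (\<Sum>i\<in>{1..<n}. aa i) + real n * cc"
proof (induction n)
  case 0 then show ?case using qq_bounds dd_nonneg[of 0] by simp
next
  case (Suc n)
  show ?case
  proof (cases "n = 0")
    case True then show ?thesis using rec_ineq[of 0] by simp
  next
    case False
    have s1: "(\<Sum>i\<in>{1..Suc n}. aa i) = (\<Sum>i\<in>{1..n}. aa i) + aa (Suc n)" by simp
    have s2: "(\<Sum>i\<in>{1..<Suc n}. aa i) = (\<Sum>i\<in>{1..<n}. aa i) + aa n" using False by (simp add: sum.atLeastLessThan_Suc)
    have "qq * dd n \<le> qq * aa n" using dd_le[of n] False qq_bounds by (intro mult_left_mono) auto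
    then show ?thesis using Suc.IH rec_ineq[of n] s1 s2 by (simp add: algebra_simps)
  qed
qed

lemma sum_bound: assumes "n \<ge> 1" shows "(\<Sum>i\<in>{1..n}. aa i) \<le> 2 * (\<beta> * vv 0 + qq * dd 0 + real n * cc)"
proof -
  have a: "(\<Sum>i\<in>{1..<n}. aa i) \<le> (\<Sum>i\<in>{1..n}. aa i)"
    by (rule sum_mono2) (auto simp: aa_nonneg)
  have b: "qq * (\<Sum>i\<in>{1..<n}. aa i) \<le> 1/2 * (\<Sum>i\<in>{1..n}. aa i)"
  proof -
    have "qq * (\<Sum>i\<in>{1..<n}. aa i) \<le> 1/2 * (\<Sum>i\<in>{1..<n}. aa i)"
      using qq_bounds by (intro mult_right_mono) (auto intro: sum_nonneg aa_nonneg)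
    then show ?thesis using a by linarith
  qed
  have "\<beta> * vv n \<ge> 0" using beta vv_nonneg by auto
  moreover have "2 * (\<beta> * vv 0 + qq * dd 0 + real n * cc) = 2 * (\<beta> * vv 0) + 2 * (qq * dd 0) + 2 * (real n * cc)"
    by (simp add: algebra_simps)
  ultimately show ?thesis using sum_claim[of n] b by linarith
qed

lemma vv0_le: "vv 0 \<le> \<Theta> * R\<^sup>2"
proof -
  have "vv 0 \<le> (\<integral>s. \<Theta> * n0 s \<partial>M)" unfolding vv_def
    by (rule integral_mono) (use base_int n0_int V0_le in auto)
  also have "\<dots> = \<Theta> * (\<integral>s. n0 s \<partial>M)" by simp
  also have "\<dots> \<le> \<Theta> * R\<^sup>2" using Theta_nonneg n0_le by (intro mult_left_mono) auto
  finally show ?thesis .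
qed

lemma qd0_le: "qq * dd 0 \<le> \<kappa> * \<nu>\<^sup>2 / (2 * \<beta>) * R\<^sup>2"
proof -
  have d0: "dd 0 \<le> L / 2 * (\<integral>s. n0 s \<partial>M)"
  proof -
    have "dd 0 \<le> (\<integral>s. L / 2 * n0 s \<partial>M)" unfolding dd_def
      by (rule integral_mono) (use base_int n0_int D0_le in auto)
    then show ?thesis by simp
  qed
  have nL: "nup * L \<le> \<nu>\<^sup>2"
  proof (cases "\<nu> \<ge> 0")
    case True then show ?thesis unfolding nup_def using params(3)
      by (simp add: power2_eq_square mult_left_mono)
  next
    case False then show ?thesis unfolding nup_def by simp
  qed
  have qL: "qq * (L / 2) \<le> \<kappa> * \<nu>\<^sup>2 / (2 * \<beta>)"
  proof -
    have "\<kappa> * (nup * L) \<le> \<kappa> * \<nu>\<^sup>2" using nL params by (intro mult_left_mono) auto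
    then show ?thesis unfolding qq_def using beta by (simp add: field_simps)
  qed
  have n0nn: "(\<integral>s. n0 s \<partial>M) \<ge> 0" by (rule integral_nonneg_AE) (auto simp: n0_def)
  have "qq * dd 0 \<le> qq * (L / 2 * (\<integral>s. n0 s \<partial>M))" using d0 qq_bounds by (intro mult_left_mono) auto
  also have "\<dots> = (qq * (L / 2)) * (\<integral>s. n0 s \<partial>M)" by simp
  also have "\<dots> \<le> \<kappa> * \<nu>\<^sup>2 / (2 * \<beta>) * (\<integral>s. n0 s \<partial>M)" using qL n0nn by (intro mult_right_mono) auto
  also have "\<dots> \<le> \<kappa> * \<nu>\<^sup>2 / (2 * \<beta>) * R\<^sup>2" using n0_le params beta by (intro mult_left_mono) auto
  finally show ?thesis .
qed

lemma main:
  shows "integrable M (\<lambda>s. g ((1 / real m) *\<^sub>R (\<Sum>i=1..m. smd_iter th gth X \<beta> dG (\<lambda>j. om j s) (x0 s) i)))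
       \<and> (\<integral>s. g ((1 / real m) *\<^sub>R (\<Sum>i=1..m. smd_iter th gth X \<beta> dG (\<lambda>j. om j s) (x0 s) i)) \<partial>M) - g xs
         \<le> 2 * R\<^sup>2 / real m * (\<Theta> * \<beta> + \<kappa> * \<nu>\<^sup>2 / (2 * \<beta>))
           + 2 * \<kappa>' * enn2real (sigma2 nrm P dG gradg xs) / \<beta>"
proof -
  define xh where "xh s = (1 / real m) *\<^sub>R (\<Sum>i=1..m. xk i s)" for s
  have xh_eq: "(1 / real m) *\<^sub>R (\<Sum>i=1..m. smd_iter th gth X \<beta> dG (\<lambda>j. om j s) (x0 s) i) = xh s" for s
    unfolding xh_def xk_def ..
  have m0: "real m > 0" using m by simp
  have sum1: "(\<Sum>i\<in>{1..m}. 1 / real m) = 1" using m0 by simp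
  have xh_sum: "xh s = (\<Sum>i\<in>{1..m}. (1 / real m) *\<^sub>R xk i s)" for s
    unfolding xh_def by (simp add: scaleR_sum_right)
  have xh_in: "s \<in> space M \<Longrightarrow> xh s \<in> X" for s
    unfolding xh_sum by (rule convex_sum[OF _ X(1) sum1]) (use xk_in in auto)
  have jen: "s \<in> space M \<Longrightarrow> g (xh s) \<le> (\<Sum>i\<in>{1..m}. 1 / real m * g (xk i s))" for s
    unfolding xh_sum by (rule convex_on_sum[OF _ _ g_convex sum1]) (use m xk_in in auto)
  have jen2: "s \<in> space M \<Longrightarrow> g (xh s) - g xs \<le> 1 / real m * (\<Sum>i\<in>{1..m}. Gk i s)" for s
  proof -
    assume s: "s \<in> space M"
    have e1: "(\<Sum>i\<in>{1..m}. 1 / real m * g (xk i s)) = 1 / real m * (\<Sum>i\<in>{1..m}. g (xk i s))"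
      by (simp add: sum_distrib_left)
    have e2: "(\<Sum>i\<in>{1..m}. Gk i s) = (\<Sum>i\<in>{1..m}. g (xk i s)) - real m * g xs"
      unfolding Gk_def by (simp add: sum_subtractf)
    have "(\<Sum>i\<in>{1..m}. 1 / real m * g (xk i s)) - g xs = 1 / real m * (\<Sum>i\<in>{1..m}. Gk i s)"
      unfolding e1 e2 using m0 by (simp add: field_simps)
    then show ?thesis using jen[OF s] by linarith
  qed
  have xh_meas: "xh \<in> borel_measurable M" unfolding xh_def[abs_def]
    using xk_meas by (intro borel_measurable_scaleR borel_measurable_const borel_measurable_sum) auto
  have gxh_meas: "(\<lambda>s. g (xh s)) \<in> borel_measurable M" by (rule g_comp_meas[OF xh_meas]) (use xh_in in auto)
  define H where "H s = g (xh s) - g xs" for s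
  define U where "U s = 1 / real m * (\<Sum>i\<in>{1..m}. Gk i s)" for s
  have Ui: "integrable M U" unfolding U_def[abs_def] using G_int by (intro integrable_mult_right integrable_sum) auto
  have Hi: "integrable M H"
  proof (rule int_sandwich[OF _ Ui])
    show "H \<in> borel_measurable M" unfolding H_def[abs_def] using gxh_meas by auto
  qed (use jen2 xh_in xs_min in \<open>auto simp: H_def U_def\<close>)
  have gi: "integrable M (\<lambda>s. g (xh s))"
  proof -
    have "integrable M (\<lambda>s. H s + g xs)" using Hi by auto
    then show ?thesis unfolding H_def by simp
  qed
  have "(\<integral>s. g (xh s) \<partial>M) - g xs = (\<integral>s. H s \<partial>M)"
    unfolding H_def using gi Mp.prob_space by (simp add: Bochner_Integration.integral_diff)
  also have "\<dots> \<le> (\<integral>s. U s \<partial>M)" by (rule integral_mono[OF Hi Ui]) (use jen2 in \<open>auto simp: H_def U_def\<close>)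
  also have "\<dots> = 1 / real m * (\<Sum>i\<in>{1..m}. aa i)"
    unfolding U_def aa_def using G_int by (simp add: integral_sum)
  also have "\<dots> \<le> 1 / real m * (2 * (\<beta> * vv 0 + qq * dd 0 + real m * cc))"
    using sum_bound[OF m] m0 by (intro mult_left_mono) auto
  also have "\<dots> \<le> 1 / real m * (2 * (\<beta> * (\<Theta> * R\<^sup>2) + \<kappa> * \<nu>\<^sup>2 / (2 * \<beta>) * R\<^sup>2 + real m * cc))"
  proof -
    have "\<beta> * vv 0 \<le> \<beta> * (\<Theta> * R\<^sup>2)" using vv0_le beta by (intro mult_left_mono) auto
    then show ?thesis using qd0_le m0 by (intro mult_left_mono) auto
  qed
  also have "\<dots> = 2 * R\<^sup>2 / real m * (\<Theta> * \<beta> + \<kappa> * \<nu>\<^sup>2 / (2 * \<beta>)) + 2 * \<kappa>' * enn2real (sigma2 nrm P dG gradg xs) / \<beta>"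
    unfolding cc_def sig_def using m0 beta by (simp add: field_simps)
  finally show ?thesis unfolding xh_eq using gi by simp
qed

end

theorem proposition1:
  fixes nrm :: "'e::euclidean_space \<Rightarrow> real"
    and X :: "'e set"
    and P :: "'w measure"
    and G :: "'e \<Rightarrow> 'w \<Rightarrow> real" and dG :: "'e \<Rightarrow> 'w \<Rightarrow> 'e"
    and g :: "'e \<Rightarrow> real" and gradg :: "'e \<Rightarrow> 'e"
    and L \<nu> \<kappa> \<kappa>' :: real
    and xs :: 'e
    and th :: "'e \<Rightarrow> real" and gth :: "'e \<Rightarrow> 'e" and \<Theta> :: real
    and M :: "'s measure" and om :: "nat \<Rightarrow> 's \<Rightarrow> 'w" and x0 :: "'s \<Rightarrow> 'e"
    and R \<beta> :: real and m :: nat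
  assumes norm: "is_norm nrm"
    and X: "convex X" "closed X" "interior X \<noteq> {}"
    and P: "prob_space P"
    and g_def: "\<forall>x\<in>X. integrable P (G x) \<and> g x = (\<integral>\<omega>. G x \<omega> \<partial>P)"
    and g_convex: "convex_on X g"
    and g_diff: "\<forall>x\<in>X. (g has_derivative (\<lambda>h. gradg x \<bullet> h)) (at x within X)"
    and g_lip: "\<forall>x\<in>X. \<forall>x'\<in>X. dual_norm nrm (gradg x - gradg x') \<le> L * nrm (x - x')"
    and xs_min: "xs \<in> X" "\<forall>x\<in>X. g xs \<le> g x"
    and xs_unique: "\<forall>y\<in>X. (\<forall>x\<in>X. g y \<le> g x) \<longrightarrow> y = xs"
    and G_diff: "AE \<omega> in P. \<forall>x\<in>X. ((\<lambda>y. G y \<omega>) has_derivative (\<lambda>h. dG x \<omega> \<bullet> h)) (at x within X)"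
    and dG_meas: "(\<lambda>(x, \<omega>). dG x \<omega>) \<in> borel_measurable (borel \<Otimes>\<^sub>M P)"
    and dG_unbiased: "\<forall>x\<in>X. integrable P (dG x) \<and> (\<integral>\<omega>. dG x \<omega> \<partial>P) = gradg x"
    and params: "1 \<le> \<kappa>" "1 \<le> \<kappa>'" "L \<le> \<nu>"
    and sigma_star_fin: "sigma2 nrm P dG gradg xs < \<infinity>"
    and S1: "\<forall>x\<in>X. sigma2 nrm P dG gradg x
               \<le> ennreal (\<kappa> * \<nu> * (g x - g xs - gradg xs \<bullet> (x - xs))
                         + \<kappa>' * enn2real (sigma2 nrm P dG gradg xs))"
    and th_deriv: "\<forall>x. (th has_derivative (\<lambda>h. gth x \<bullet> h)) (at x)"
    and th_C1: "continuous_on UNIV gth"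
    and th_convex: "convex_on UNIV th"
    and th_strong: "\<forall>x x'. (gth x - gth x') \<bullet> (x - x') \<ge> (nrm (x - x'))\<^sup>2"
    and th_min: "th 0 = 0" "\<forall>x. th x \<ge> 0"
    and th_bound: "\<forall>x. th x \<le> \<Theta> * (nrm x)\<^sup>2"
    and M: "prob_space M"
    and om_meas: "\<forall>i. om i \<in> measurable M P"
    and om_distr: "\<forall>i. distr M P (om i) = P"
    and om_indep: "prob_space.indep_vars M (\<lambda>_. P) om UNIV"
    and x0_meas: "x0 \<in> borel_measurable M"
    and x0_indep: "indep_rvs M borel x0 (Pi\<^sub>M UNIV (\<lambda>_::nat. P)) (\<lambda>s i. om i s)"
    and x0_in: "\<forall>s\<in>space M. x0 s \<in> X"
    and x0_R: "(\<integral>\<^sup>+ s. ennreal ((nrm (x0 s - xs))\<^sup>2) \<partial>M) \<le> ennreal (R\<^sup>2)"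
    and beta: "\<beta> > 0" "\<beta> \<ge> 2 * \<kappa> * \<nu>"
    and m: "m \<ge> 1"
  shows "integrable M (\<lambda>s. g ((1 / real m) *\<^sub>R (\<Sum>i=1..m. smd_iter th gth X \<beta> dG (\<lambda>j. om j s) (x0 s) i)))
       \<and> (\<integral>s. g ((1 / real m) *\<^sub>R (\<Sum>i=1..m. smd_iter th gth X \<beta> dG (\<lambda>j. om j s) (x0 s) i)) \<partial>M) - g xs
         \<le> 2 * R\<^sup>2 / real m * (\<Theta> * \<beta> + \<kappa> * \<nu>\<^sup>2 / (2 * \<beta>))
           + 2 * \<kappa>' * enn2real (sigma2 nrm P dG gradg xs) / \<beta>"
  proof -
  interpret smd nrm X P G dG g gradg L \<nu> \<kappa> \<kappa>' xs th gth \<Theta> M om x0 R \<beta> m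
    by (rule smd.intro) (fact assms)+
  show ?thesis by (rule main)
qed

end
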